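(* For all integers $s\ge1$ and $1\le r\le\min\{m,n\}$, $$\dim(X_r^{\star s})\le\min\big\{s\dim(X_r)-(s-1)\dim(X_1),\ \dim\mathbb{P}(\mathrm{Mat}_{m,n})\big\},$$ i.e. $\dim(X_r^{\star s})\le\min\{sr(m+n-r)-(s-1)(m+n-1),\,mn\}-1$.
   Context: Work over $\mathbb{C}$. $X_r\subset\mathbb{P}(\mathrm{Mat}_{m,n})\cong\mathbb{P}^{mn-1}$ is the variety of $m\times n$ matrices of rank at most $r$ (of dimension $r(m+n-r)-1$). For projective varieties $X,Y\subset\mathbb{P}^N$, the Hadamard product $X\star Y$ is the Zariski closure of $\{p\star q: p\in X,q\in Y,\ p\star q\text{ defined}\}$ where $p\star q=[p_0q_0:\dots:p_Nq_N]$; $X^{\star1}=X$, $X^{\star s}=X\star X^{\star(s-1)}$. *)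

theory Defs
  imports "Jordan_Normal_Form.DL_Rank" "HOL-Library.Extended_Nat"
begin

inductive_set poly_fun :: "nat \<Rightarrow> nat \<Rightarrow> (complex mat \<Rightarrow> complex) set"
  for m n :: nat where
  pf_const: "(\<lambda>A. c) \<in> poly_fun m n"
| pf_var: "i < m \<Longrightarrow> j < n \<Longrightarrow> (\<lambda>A. A $$ (i, j)) \<in> poly_fun m n"
| pf_add: "f \<in> poly_fun m n \<Longrightarrow> g \<in> poly_fun m n \<Longrightarrow> (\<lambda>A. f A + g A) \<in> poly_fun m n"
| pf_mult: "f \<in> poly_fun m n \<Longrightarrow> g \<in> poly_fun m n \<Longrightarrow> (\<lambda>A. f A * g A) \<in> poly_fun m n"

definition zariski_closed :: "nat \<Rightarrow> nat \<Rightarrow> complex mat set \<Rightarrow> bool" where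
  "zariski_closed m n Z \<longleftrightarrow>
     (\<exists>F \<subseteq> poly_fun m n. Z = {A \<in> carrier_mat m n. \<forall>f\<in>F. f A = 0})"

definition zariski_closure :: "nat \<Rightarrow> nat \<Rightarrow> complex mat set \<Rightarrow> complex mat set" where
  "zariski_closure m n S = \<Inter> {Z. zariski_closed m n Z \<and> S \<subseteq> Z}"

definition zariski_irreducible :: "nat \<Rightarrow> nat \<Rightarrow> complex mat set \<Rightarrow> bool" where
  "zariski_irreducible m n Z \<longleftrightarrow> zariski_closed m n Z \<and> Z \<noteq> {} \<and>
     (\<forall>Z1 Z2. zariski_closed m n Z1 \<longrightarrow> zariski_closed m n Z2 \<longrightarrow> Z = Z1 \<union> Z2 \<longrightarrow>
        Z = Z1 \<or> Z = Z2)"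

definition zdim :: "nat \<Rightarrow> nat \<Rightarrow> complex mat set \<Rightarrow> enat" where
  "zdim m n V = Sup {enat k | k. \<exists>Z :: nat \<Rightarrow> complex mat set.
      (\<forall>i\<le>k. zariski_irreducible m n (Z i) \<and> Z i \<subseteq> V) \<and>
      (\<forall>i<k. Z i \<subset> Z (Suc i))}"

definition hadamard :: "complex mat \<Rightarrow> complex mat \<Rightarrow> complex mat" where
  "hadamard A B = mat (dim_row A) (dim_col A) (\<lambda>(i, j). A $$ (i, j) * B $$ (i, j))"

text \<open>Affine cone of X_r: matrices of rank at most r.\<close>
definition rank_le_cone :: "nat \<Rightarrow> nat \<Rightarrow> nat \<Rightarrow> complex mat set" where
  "rank_le_cone m n r = {A \<in> carrier_mat m n. vec_space.rank m A \<le> r}"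

fun hadamard_power_cone :: "nat \<Rightarrow> nat \<Rightarrow> complex mat set \<Rightarrow> nat \<Rightarrow> complex mat set" where
  "hadamard_power_cone m n S 0 = zariski_closure m n S"
| "hadamard_power_cone m n S (Suc k) =
     zariski_closure m n {hadamard A B | A B. A \<in> S \<and> B \<in> hadamard_power_cone m n S k}"

text \<open>hadamard_power_cone m n S k is the affine cone of X^{*(k+1)} when S is the cone of X.\<close>

end

theory Submission
  imports Defs
begin


lemma linsys_nontrivial:
  fixes e :: "'b \<Rightarrow> 'a \<Rightarrow> complex"
  assumes "finite B" "finite U" "card B < card U"
  shows "\<exists>c. (\<exists>u\<in>U. c u \<noteq> 0) \<and> (\<forall>\<beta>\<in>B. (\<Sum>u\<in>U. e \<beta> u * c u) = 0)"
  using assms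
proof (induction B arbitrary: U e rule: finite_induct)
  case empty
  then obtain u where u: "u \<in> U" by fastforce
  show ?case by (rule exI[of _ "\<lambda>x. if x = u then 1 else 0"]) (use u in auto)
next
  case (insert b B)
  show ?case
  proof (cases "\<forall>u\<in>U. e b u = 0")
    case True
    have "card B < card U" using insert by simp
    then obtain c where c: "\<exists>u\<in>U. c u \<noteq> 0" "\<forall>\<beta>\<in>B. (\<Sum>u\<in>U. e \<beta> u * c u) = 0"
      using insert.IH[OF insert.prems(1)] by blast
    show ?thesis using c True by (intro exI[of _ c]) auto
  next
    case False
    then obtain u0 where u0: "u0 \<in> U" "e b u0 \<noteq> 0" by blast
    define U' where "U' = U - {u0}"
    define e' where "e' = (\<lambda>\<beta> u. e \<beta> u - e \<beta> u0 * e b u / e b u0)"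
    have fU': "finite U'" using insert.prems by (simp add: U'_def)
    have cU': "card B < card U'" using insert u0 by (simp add: U'_def)
    obtain c' where c': "\<exists>u\<in>U'. c' u \<noteq> 0" "\<forall>\<beta>\<in>B. (\<Sum>u\<in>U'. e' \<beta> u * c' u) = 0"
      using insert.IH[OF fU' cU', of e'] by blast
    define c where "c = (\<lambda>u. if u = u0 then - (\<Sum>u\<in>U'. e b u * c' u) / e b u0 else c' u)"
    have split: "(\<Sum>u\<in>U. e \<beta> u * c u) = e \<beta> u0 * c u0 + (\<Sum>u\<in>U'. e \<beta> u * c' u)" for \<beta>
    proof -
      have "(\<Sum>u\<in>U. e \<beta> u * c u) = e \<beta> u0 * c u0 + (\<Sum>u\<in>U'. e \<beta> u * c u)"
        unfolding U'_def using u0 insert.prems by (simp add: sum.remove)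
      also have "(\<Sum>u\<in>U'. e \<beta> u * c u) = (\<Sum>u\<in>U'. e \<beta> u * c' u)"
        by (rule sum.cong) (auto simp: c_def U'_def)
      finally show ?thesis .
    qed
    have "\<forall>\<beta>\<in>insert b B. (\<Sum>u\<in>U. e \<beta> u * c u) = 0"
    proof
      fix \<beta> assume "\<beta> \<in> insert b B"
      then consider "\<beta> = b" | "\<beta> \<in> B" by blast
      then show "(\<Sum>u\<in>U. e \<beta> u * c u) = 0"
      proof cases
        case 1
        then show ?thesis using u0 by (simp only: split) (simp add: c_def)
      next
        case 2
        have "0 = (\<Sum>u\<in>U'. e' \<beta> u * c' u)" using c'(2) 2 by auto
        also have "\<dots> = (\<Sum>u\<in>U'. e \<beta> u * c' u) - e \<beta> u0 / e b u0 * (\<Sum>u\<in>U'. e b u * c' u)"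
          by (simp add: e'_def algebra_simps sum_subtractf sum_distrib_left)
        also have "\<dots> = (\<Sum>u\<in>U. e \<beta> u * c u)"
          using u0 by (simp only: split) (simp add: c_def)
        finally show ?thesis by simp
      qed
    qed
    moreover have "\<exists>u\<in>U. c u \<noteq> 0"
      using c'(1) by (auto simp: c_def U'_def)
    ultimately show ?thesis by blast
  qed
qed



definition mnm :: "'v set \<Rightarrow> ('v \<Rightarrow> nat) \<Rightarrow> ('v \<Rightarrow> complex) \<Rightarrow> complex" where
  "mnm I \<alpha> y = (\<Prod>i\<in>I. y i ^ \<alpha> i)"

definition box :: "'v set \<Rightarrow> nat \<Rightarrow> ('v \<Rightarrow> nat) set" where
  "box I D = PiE I (\<lambda>_. {..D})"

definition brep :: "'v set \<Rightarrow> nat \<Rightarrow> (('v \<Rightarrow> complex) \<Rightarrow> complex) \<Rightarrow> bool" where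
  "brep I D f \<longleftrightarrow> (\<exists>c. \<forall>y. f y = (\<Sum>\<alpha>\<in>box I D. c \<alpha> * mnm I \<alpha> y))"

definition isP :: "'v set \<Rightarrow> (('v \<Rightarrow> complex) \<Rightarrow> complex) \<Rightarrow> bool" where
  "isP I f \<longleftrightarrow> (\<exists>D. brep I D f)"

lemma finite_box[simp]: "finite I \<Longrightarrow> finite (box I D)"
  unfolding box_def by (simp add: finite_PiE)

lemma card_box: "finite I \<Longrightarrow> card (box I D) = (D+1) ^ card I"
  unfolding box_def by (simp add: card_PiE)

lemma box_mono: "D \<le> D' \<Longrightarrow> box I D \<subseteq> box I D'"
  unfolding box_def by (auto simp: PiE_def Pi_def)

lemma brep_mono: assumes "finite I" "D \<le> D'" "brep I D f" shows "brep I D' f"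
proof -
  obtain c where c: "\<forall>y. f y = (\<Sum>\<alpha>\<in>box I D. c \<alpha> * mnm I \<alpha> y)" using assms(3) brep_def by blast
  define c' where "c' = (\<lambda>\<alpha>. if \<alpha> \<in> box I D then c \<alpha> else 0)"
  have "f y = (\<Sum>\<alpha>\<in>box I D'. c' \<alpha> * mnm I \<alpha> y)" for y
    unfolding c[rule_format]
    by (rule sum.mono_neutral_cong_left) (use assms box_mono[OF assms(2)] in \<open>auto simp: c'_def\<close>)
  then show ?thesis unfolding brep_def by blast
qed

lemma brep_gen:
  assumes "finite I" "finite S" "\<forall>s\<in>S. h s \<in> box I D"
  shows "brep I D (\<lambda>y. \<Sum>s\<in>S. w s * mnm I (h s) y)"
proof -
  define c where "c = (\<lambda>\<gamma>. \<Sum>s\<in>{s\<in>S. h s = \<gamma>}. w s)"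
  have "(\<Sum>s\<in>S. w s * mnm I (h s) y) = (\<Sum>\<gamma>\<in>box I D. c \<gamma> * mnm I \<gamma> y)" for y
  proof -
    have "(\<Sum>s\<in>S. w s * mnm I (h s) y) = (\<Sum>\<gamma>\<in>box I D. \<Sum>s\<in>{s\<in>S. h s = \<gamma>}. w s * mnm I (h s) y)"
      by (rule sum.group[symmetric]) (use assms in auto)
    also have "\<dots> = (\<Sum>\<gamma>\<in>box I D. c \<gamma> * mnm I \<gamma> y)"
      unfolding c_def sum_distrib_right by (rule sum.cong) auto
    finally show ?thesis .
  qed
  then show ?thesis unfolding brep_def by blast
qed

lemma mnm_add:
  "mnm I (\<lambda>i. \<alpha> i + \<beta> i) y = mnm I \<alpha> y * mnm I \<beta> y"
  unfolding mnm_def by (simp add: power_add prod.distrib)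

lemma mnm_cong: "(\<And>i. i \<in> I \<Longrightarrow> \<alpha> i = \<beta> i) \<Longrightarrow> mnm I \<alpha> y = mnm I \<beta> y"
  unfolding mnm_def by (rule prod.cong) auto

lemma box_add: "\<alpha> \<in> box I D1 \<Longrightarrow> \<beta> \<in> box I D2 \<Longrightarrow> restrict (\<lambda>i. \<alpha> i + \<beta> i) I \<in> box I (D1 + D2)"
  unfolding box_def by (auto simp: PiE_iff intro: add_mono)

lemma brep_mult:
  assumes "finite I" "brep I D1 f" "brep I D2 g"
  shows "brep I (D1 + D2) (\<lambda>y. f y * g y)"
proof -
  obtain c1 where c1: "\<forall>y. f y = (\<Sum>\<alpha>\<in>box I D1. c1 \<alpha> * mnm I \<alpha> y)" using assms(2) brep_def by blast
  obtain c2 where c2: "\<forall>y. g y = (\<Sum>\<alpha>\<in>box I D2. c2 \<alpha> * mnm I \<alpha> y)" using assms(3) brep_def by blast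
  define h where "h = (\<lambda>(\<alpha>::'a\<Rightarrow>nat,\<beta>::'a\<Rightarrow>nat). restrict (\<lambda>i. \<alpha> i + \<beta> i) I)"
  have "f y * g y = (\<Sum>p\<in>box I D1 \<times> box I D2. (c1 (fst p) * c2 (snd p)) * mnm I (h p) y)" for y
  proof -
    have "f y * g y = (\<Sum>\<alpha>\<in>box I D1. \<Sum>\<beta>\<in>box I D2. (c1 \<alpha> * mnm I \<alpha> y) * (c2 \<beta> * mnm I \<beta> y))"
      unfolding c1[rule_format] c2[rule_format] by (simp add: sum_product)
    also have "\<dots> = (\<Sum>p\<in>box I D1 \<times> box I D2. (c1 (fst p) * mnm I (fst p) y) * (c2 (snd p) * mnm I (snd p) y))"
      by (simp add: sum.cartesian_product case_prod_beta)
    also have "\<dots> = (\<Sum>p\<in>box I D1 \<times> box I D2. (c1 (fst p) * c2 (snd p)) * mnm I (h p) y)"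
    proof (rule sum.cong[OF refl])
      fix p assume "p \<in> box I D1 \<times> box I D2"
      have "mnm I (h p) y = mnm I (\<lambda>i. fst p i + snd p i) y"
        by (rule mnm_cong) (auto simp: h_def split: prod.splits)
      then show "(c1 (fst p) * mnm I (fst p) y) * (c2 (snd p) * mnm I (snd p) y) = (c1 (fst p) * c2 (snd p)) * mnm I (h p) y"
        by (simp add: mnm_add)
    qed
    finally show ?thesis .
  qed
  moreover have "brep I (D1 + D2) (\<lambda>y. \<Sum>p\<in>box I D1 \<times> box I D2. (c1 (fst p) * c2 (snd p)) * mnm I (h p) y)"
    by (rule brep_gen) (use assms(1) box_add in \<open>auto simp: h_def\<close>)
  ultimately show ?thesis by simp
qed

lemma brep_add:
  assumes "brep I D f" "brep I D g"
  shows "brep I D (\<lambda>y. f y + g y)"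
proof -
  obtain c1 where c1: "\<forall>y. f y = (\<Sum>\<alpha>\<in>box I D. c1 \<alpha> * mnm I \<alpha> y)" using assms(1) brep_def by blast
  obtain c2 where c2: "\<forall>y. g y = (\<Sum>\<alpha>\<in>box I D. c2 \<alpha> * mnm I \<alpha> y)" using assms(2) brep_def by blast
  have "f y + g y = (\<Sum>\<alpha>\<in>box I D. (c1 \<alpha> + c2 \<alpha>) * mnm I \<alpha> y)" for y
    unfolding c1[rule_format] c2[rule_format] by (simp add: sum.distrib algebra_simps)
  then show ?thesis unfolding brep_def by (intro exI[of _ "\<lambda>\<alpha>. c1 \<alpha> + c2 \<alpha>"]) auto
qed

lemma brep_scale:
  assumes "brep I D f"
  shows "brep I D (\<lambda>y. a * f y)"
proof -
  obtain c1 where c1: "\<forall>y. f y = (\<Sum>\<alpha>\<in>box I D. c1 \<alpha> * mnm I \<alpha> y)" using assms(1) brep_def by blast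
  have "a * f y = (\<Sum>\<alpha>\<in>box I D. (a * c1 \<alpha>) * mnm I \<alpha> y)" for y
    unfolding c1[rule_format] by (simp add: sum_distrib_left algebra_simps)
  then show ?thesis unfolding brep_def by (intro exI[of _ "\<lambda>\<alpha>. a * c1 \<alpha>"]) auto
qed

lemma brep_const: "finite I \<Longrightarrow> brep I D (\<lambda>y. a)"
proof -
  assume fI: "finite I"
  have "brep I D (\<lambda>y. \<Sum>s\<in>{()}. a * mnm I (\<lambda>i\<in>I. 0) y)"
    by (rule brep_gen) (use fI in \<open>auto simp: box_def\<close>)
  then show ?thesis by (simp add: mnm_def)
qed

lemma brep_var: assumes "finite I" "v \<in> I" shows "brep I 1 (\<lambda>y. y v)"
proof -
  have "brep I 1 (\<lambda>y. \<Sum>s\<in>{()}. 1 * mnm I (\<lambda>i\<in>I. if i = v then 1 else 0) y)"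
    by (rule brep_gen) (use assms in \<open>auto simp: box_def\<close>)
  moreover have "mnm I (\<lambda>i\<in>I. if i = v then 1 else 0) y = y v" for y
  proof -
    have "mnm I (\<lambda>i\<in>I. if i = v then 1 else 0) y = (\<Prod>i\<in>I. if i = v then y i else 1)"
      unfolding mnm_def by (rule prod.cong) auto
    also have "\<dots> = y v" using assms by (simp add: prod.delta)
    finally show ?thesis .
  qed
  ultimately show ?thesis by simp
qed

lemma isP_const: "finite I \<Longrightarrow> isP I (\<lambda>y. a)"
  unfolding isP_def using brep_const[of I 0 a] by blast

lemma isP_var: "finite I \<Longrightarrow> v \<in> I \<Longrightarrow> isP I (\<lambda>y. y v)"
  unfolding isP_def using brep_var[of I v] by blast

lemma isP_add: assumes "finite I" "isP I f" "isP I g" shows "isP I (\<lambda>y. f y + g y)"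
proof -
  obtain D1 D2 where "brep I D1 f" "brep I D2 g" using assms unfolding isP_def by blast
  then have "brep I (max D1 D2) f" "brep I (max D1 D2) g"
    using brep_mono[OF assms(1) max.cobounded1] brep_mono[OF assms(1) max.cobounded2] by auto
  from brep_add[OF this] show ?thesis unfolding isP_def by blast
qed

lemma isP_mult: assumes "finite I" "isP I f" "isP I g" shows "isP I (\<lambda>y. f y * g y)"
proof -
  obtain D1 D2 where "brep I D1 f" "brep I D2 g" using assms unfolding isP_def by blast
  from brep_mult[OF assms(1) this] show ?thesis unfolding isP_def by blast
qed

lemma isP_scale: assumes "isP I f" shows "isP I (\<lambda>y. a * f y)"
proof -
  obtain D1 where "brep I D1 f" using assms unfolding isP_def by blast
  from brep_scale[OF this] show ?thesis unfolding isP_def by blast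
qed

lemma isP_minus: assumes "finite I" "isP I f" "isP I g" shows "isP I (\<lambda>y. f y - g y)"
proof -
  have "isP I (\<lambda>y. f y + (-1) * g y)" by (rule isP_add[OF assms(1) assms(2) isP_scale[OF assms(3)]])
  then show ?thesis by simp
qed

lemma isP_sum: assumes "finite I" "finite S" "\<And>s. s \<in> S \<Longrightarrow> isP I (f s)"
  shows "isP I (\<lambda>y. \<Sum>s\<in>S. f s y)"
  using assms(2,3)
proof (induction S rule: finite_induct)
  case empty then show ?case using isP_const[OF assms(1)] by simp
next
  case (insert x F)
  have "isP I (\<lambda>y. f x y + (\<Sum>s\<in>F. f s y))" by (rule isP_add[OF assms(1)]) (use insert in auto)
  then show ?case using insert.hyps by simp
qed

lemma isP_prod: assumes "finite I" "finite S" "\<And>s. s \<in> S \<Longrightarrow> isP I (f s)"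
  shows "isP I (\<lambda>y. \<Prod>s\<in>S. f s y)"
  using assms(2,3)
proof (induction S rule: finite_induct)
  case empty then show ?case using isP_const[OF assms(1)] by simp
next
  case (insert x F)
  have "isP I (\<lambda>y. f x y * (\<Prod>s\<in>F. f s y))" by (rule isP_mult[OF assms(1)]) (use insert in auto)
  then show ?case using insert.hyps by simp
qed

lemma isP_power: assumes "finite I" "isP I f" shows "isP I (\<lambda>y. f y ^ k)"
proof (induction k)
  case 0 then show ?case using isP_const[OF assms(1)] by simp
next
  case (Suc k)
  have "isP I (\<lambda>y. f y * f y ^ k)" by (rule isP_mult[OF assms(1) assms(2) Suc])
  then show ?case by simp
qed

lemma brep_power:
  assumes "finite I" "brep I e f"
  shows "brep I (e * j) (\<lambda>y. f y ^ j)"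
proof (induction j)
  case 0 then show ?case using brep_const[OF assms(1)] by simp
next
  case (Suc j)
  from brep_mult[OF assms(1) assms(2) Suc] show ?case by (simp add: algebra_simps)
qed

lemma brep_prod_power:
  assumes "finite I" "finite K" "\<And>k. k \<in> K \<Longrightarrow> brep I e (f k)"
  shows "brep I (\<Sum>k\<in>K. e * \<alpha> k) (\<lambda>y. \<Prod>k\<in>K. f k y ^ \<alpha> k)"
  using assms(2,3)
proof (induction K rule: finite_induct)
  case empty then show ?case using brep_const[OF assms(1)] by simp
next
  case (insert x F)
  have p: "brep I (e * \<alpha> x) (\<lambda>y. f x y ^ \<alpha> x)"
    using brep_power[OF assms(1) insert.prems[of x]] by simp
  have "brep I (e * \<alpha> x + (\<Sum>k\<in>F. e * \<alpha> k)) (\<lambda>y. f x y ^ \<alpha> x * (\<Prod>k\<in>F. f k y ^ \<alpha> k))"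
    using brep_mult[OF assms(1) p insert.IH] insert.prems by simp
  then show ?case using insert.hyps by simp
qed

lemma brep_local:
  assumes "brep I D f" "\<And>i. i \<in> I \<Longrightarrow> y i = y' i"
  shows "f y = f y'"
proof -
  obtain c where c: "\<forall>y. f y = (\<Sum>\<alpha>\<in>box I D. c \<alpha> * mnm I \<alpha> y)" using assms(1) brep_def by blast
  have "mnm I \<alpha> y = mnm I \<alpha> y'" for \<alpha> unfolding mnm_def using assms(2) by (intro prod.cong) auto
  then show ?thesis using c by simp
qed

lemma isP_local: "isP I f \<Longrightarrow> (\<And>i. i \<in> I \<Longrightarrow> y i = y' i) \<Longrightarrow> f y = f y'"
  unfolding isP_def using brep_local by metis



lemma mnm_insert:
  assumes "finite K" "v \<notin> K"
  shows "mnm (insert v K) (\<alpha>(v := j)) y = mnm K \<alpha> y * y v ^ j"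
proof -
  have "mnm (insert v K) (\<alpha>(v := j)) y = y v ^ j * (\<Prod>i\<in>K. y i ^ (\<alpha>(v := j)) i)"
    unfolding mnm_def using assms by simp
  also have "(\<Prod>i\<in>K. y i ^ (\<alpha>(v := j)) i) = mnm K \<alpha> y"
    unfolding mnm_def using assms(2) by (intro prod.cong) auto
  finally show ?thesis by (metis mult.commute)
qed

lemma box_insert_sum:
  assumes "finite K" "v \<notin> K"
  shows "(\<Sum>\<alpha>\<in>box (insert v K) D. c \<alpha> * mnm (insert v K) \<alpha> y)
       = (\<Sum>j\<le>D. (\<Sum>\<alpha>\<in>box K D. c (\<alpha>(v := j)) * mnm K \<alpha> y) * y v ^ j)"
proof -
  have "(\<Sum>j\<le>D. (\<Sum>\<alpha>\<in>box K D. c (\<alpha>(v := j)) * mnm K \<alpha> y) * y v ^ j)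
      = (\<Sum>j\<le>D. \<Sum>\<alpha>\<in>box K D. c (\<alpha>(v := j)) * mnm K \<alpha> y * y v ^ j)"
    by (simp add: sum_distrib_right)
  also have "\<dots> = (\<Sum>\<alpha>\<in>box K D. \<Sum>j\<le>D. c (\<alpha>(v := j)) * mnm K \<alpha> y * y v ^ j)"
    by (rule sum.swap)
  also have "\<dots> = (\<Sum>p\<in>box K D \<times> {..D}. c ((fst p)(v := snd p)) * mnm K (fst p) y * y v ^ (snd p))"
    by (simp add: sum.cartesian_product case_prod_beta)
  also have "\<dots> = (\<Sum>\<alpha>\<in>box (insert v K) D. c \<alpha> * mnm (insert v K) \<alpha> y)"
  proof (rule sum.reindex_bij_witness[where j="\<lambda>p. (fst p)(v := snd p)" and i="\<lambda>\<alpha>. (\<alpha>(v := undefined), \<alpha> v)"])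
    fix p assume p: "p \<in> box K D \<times> {..D}"
    then have "fst p v = undefined" using assms(2) unfolding box_def by (auto simp: PiE_iff extensional_def)
    then show "((fst p)(v := snd p, v := undefined), ((fst p)(v := snd p)) v) = p" by (cases p) auto
    show "(fst p)(v := snd p) \<in> box (insert v K) D" using p unfolding box_def by (auto simp: PiE_iff extensional_def)
    show "c ((fst p)(v := snd p)) * mnm (insert v K) ((fst p)(v := snd p)) y = c ((fst p)(v := snd p)) * mnm K (fst p) y * y v ^ snd p"
      using mnm_insert[OF assms] by simp
  next
    fix \<alpha> assume a: "\<alpha> \<in> box (insert v K) D"
    then show "(fst (\<alpha>(v := undefined), \<alpha> v))(v := snd (\<alpha>(v := undefined), \<alpha> v)) = \<alpha>" by auto
    show "(\<alpha>(v := undefined), \<alpha> v) \<in> box K D \<times> {..D}" using a assms(2) unfolding box_def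
      by (auto simp: PiE_iff extensional_def)
  qed
  finally show ?thesis by simp
qed

lemma univ_coeffs_zero:
  assumes "\<forall>z. (\<Sum>j\<le>D. a j * z ^ j) = (0::complex)" "j \<le> D"
  shows "a j = 0"
proof -
  define p where "p = (\<Sum>j\<le>D. monom (a j) j)"
  have "poly p z = 0" for z using assms(1) by (simp add: p_def poly_sum poly_monom)
  then have "p = 0" using poly_all_0_iff_0 by blast
  then have "coeff p j = 0" by simp
  moreover have "coeff p j = a j" unfolding p_def coeff_sum coeff_monom using assms(2)
    by (simp add: sum.delta)
  ultimately show ?thesis by simp
qed

lemma mnm_indep:
  assumes "finite K" "\<forall>y. (\<Sum>\<alpha>\<in>box K D. c \<alpha> * mnm K \<alpha> y) = 0" "\<alpha> \<in> box K D"
  shows "c \<alpha> = 0"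
  using assms
proof (induction K arbitrary: c \<alpha> rule: finite_induct)
  case empty
  have bx: "box {} D = {\<lambda>_. undefined}" unfolding box_def by simp
  show ?case using empty.prems by (simp add: mnm_def bx)
next
  case (insert v K)
  define C where "C = (\<lambda>j y. \<Sum>\<alpha>\<in>box K D. c (\<alpha>(v := j)) * mnm K \<alpha> y)"
  have eq: "\<forall>y. (\<Sum>j\<le>D. C j y * y v ^ j) = 0"
    using insert.prems(1) box_insert_sum[OF insert.hyps(1,2), of c] by (simp add: C_def)
  have Cloc: "C j (y(v := z)) = C j y" for j y z
  proof -
    have "mnm K \<alpha> (y(v := z)) = mnm K \<alpha> y" for \<alpha>
      unfolding mnm_def using insert.hyps(2) by (intro prod.cong) auto
    then show ?thesis by (simp add: C_def)
  qed
  have C0: "C j y = 0" if "j \<le> D" for j y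
  proof -
    have "\<forall>z. (\<Sum>j\<le>D. C j y * z ^ j) = 0"
    proof
      fix z
      have "(\<Sum>j\<le>D. C j (y(v := z)) * (y(v := z)) v ^ j) = 0" using eq by blast
      then show "(\<Sum>j\<le>D. C j y * z ^ j) = 0" by (simp add: Cloc)
    qed
    from univ_coeffs_zero[OF this that] show ?thesis .
  qed
  have \<alpha>v: "\<alpha> v \<le> D" and \<alpha>': "\<alpha>(v := undefined) \<in> box K D"
    using insert.prems(2) insert.hyps(2) unfolding box_def by (auto simp: PiE_iff extensional_def)
  have h1: "\<forall>y. (\<Sum>\<beta>\<in>box K D. c (\<beta>(v := \<alpha> v)) * mnm K \<beta> y) = 0"
    using C0[OF \<alpha>v] by (simp add: C_def)
  have "c ((\<alpha>(v := undefined))(v := \<alpha> v)) = 0"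
    using insert.IH[of "\<lambda>\<beta>. c (\<beta>(v := \<alpha> v))" "\<alpha>(v := undefined)", OF h1 \<alpha>'] .
  moreover have "(\<alpha>(v := undefined))(v := \<alpha> v) = \<alpha>" by simp
  ultimately show ?case by metis
qed

lemma brep_line:
  assumes "finite I" "brep I D f"
  shows "\<exists>p. \<forall>t. f (\<lambda>i. a i + t * b i) = poly p t"
proof -
  obtain c where c: "\<forall>y. f y = (\<Sum>\<alpha>\<in>box I D. c \<alpha> * mnm I \<alpha> y)" using assms(2) brep_def by blast
  define p where "p = (\<Sum>\<alpha>\<in>box I D. Polynomial.smult (c \<alpha>) (\<Prod>i\<in>I. [:a i, b i:] ^ \<alpha> i))"
  have "f (\<lambda>i. a i + t * b i) = poly p t" for t
    unfolding c[rule_format] p_def by (simp add: poly_sum poly_prod mnm_def algebra_simps)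
  then show ?thesis by blast
qed

lemma isP_domain:
  assumes "finite I" "isP I f" "isP I g" "f y1 \<noteq> 0" "g y2 \<noteq> 0"
  shows "\<exists>y. f y \<noteq> 0 \<and> g y \<noteq> 0"
proof -
  obtain D1 D2 where b: "brep I D1 f" "brep I D2 g" using assms(2,3) unfolding isP_def by blast
  define L where "L = (\<lambda>t::complex. \<lambda>i. y1 i + t * (y2 i - y1 i))"
  obtain p where p: "\<forall>t. f (L t) = poly p t"
    using brep_line[OF assms(1) b(1), of y1 "\<lambda>i. y2 i - y1 i"] unfolding L_def by blast
  obtain q where q: "\<forall>t. g (L t) = poly q t"
    using brep_line[OF assms(1) b(2), of y1 "\<lambda>i. y2 i - y1 i"] unfolding L_def by blast
  have "L 0 = y1" "L 1 = y2" by (auto simp: L_def)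
  then have "poly p 0 \<noteq> 0" "poly q 1 \<noteq> 0" using p q assms(4,5) by metis+
  then have "p \<noteq> 0" "q \<noteq> 0" by auto
  then have "p * q \<noteq> 0" by simp
  then obtain t where "poly (p * q) t \<noteq> 0" using poly_all_0_iff_0 by blast
  then have "f (L t) \<noteq> 0 \<and> g (L t) \<noteq> 0" using p q by simp
  then show ?thesis by blast
qed

lemma alg_dep:
  assumes fI: "finite I" and fK: "finite K" and cardIK: "card I < card K"
    and fP: "\<forall>\<kappa>\<in>K. isP I (f \<kappa>)"
  shows "\<exists>D c. (\<exists>\<alpha>\<in>box K D. c \<alpha> \<noteq> 0) \<and> (\<forall>y. (\<Sum>\<alpha>\<in>box K D. c \<alpha> * mnm K \<alpha> (\<lambda>\<kappa>. f \<kappa> y)) = 0)"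
proof -
  obtain Dk where Dk: "\<forall>\<kappa>\<in>K. brep I (Dk \<kappa>) (f \<kappa>)" using fP unfolding isP_def by metis
  define e where "e = (\<Sum>\<kappa>\<in>K. Dk \<kappa>)"
  have "Dk \<kappa> \<le> e" if "\<kappa> \<in> K" for \<kappa> unfolding e_def by (rule member_le_sum[OF that _ fK]) auto
  then have fe: "\<forall>\<kappa>\<in>K. brep I e (f \<kappa>)"
    using Dk brep_mono[OF fI] by blast
  define k where "k = card K"
  define d where "d = card I"
  define Kc where "Kc = e * k + 1"
  define D where "D = Kc ^ d"
  define E where "E = e * k * D"
  define F where "F = (\<lambda>\<alpha> y. mnm K \<alpha> (\<lambda>\<kappa>. f \<kappa> y))"
  have FE: "brep I E (F \<alpha>)" if "\<alpha> \<in> box K D" for \<alpha>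
  proof -
    have b: "brep I (\<Sum>\<kappa>\<in>K. e * \<alpha> \<kappa>) (\<lambda>y. \<Prod>\<kappa>\<in>K. f \<kappa> y ^ \<alpha> \<kappa>)"
      by (rule brep_prod_power[OF fI fK]) (use fe in auto)
    have "(\<Sum>\<kappa>\<in>K. e * \<alpha> \<kappa>) \<le> (\<Sum>\<kappa>\<in>K. e * D)"
      using that unfolding box_def by (intro sum_mono) (auto simp: PiE_iff)
    also have "\<dots> = E" by (simp add: E_def k_def)
    finally show ?thesis using brep_mono[OF fI _ b] unfolding F_def mnm_def by blast
  qed
  have "\<forall>\<alpha>\<in>box K D. \<exists>M. \<forall>y. F \<alpha> y = (\<Sum>\<beta>\<in>box I E. M \<beta> * mnm I \<beta> y)"
    using FE unfolding brep_def by blast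
  then obtain M where M: "\<forall>\<alpha>\<in>box K D. \<forall>y. F \<alpha> y = (\<Sum>\<beta>\<in>box I E. M \<alpha> \<beta> * mnm I \<beta> y)"
    by metis
  have cnt: "card (box I E) < card (box K D)"
  proof -
    have "E + 1 \<le> Kc * (D + 1)" by (simp add: E_def Kc_def algebra_simps)
    then have "(E + 1) ^ d \<le> (Kc * (D + 1)) ^ d" by (rule power_mono) simp
    also have "\<dots> = D * (D + 1) ^ d" unfolding D_def by (rule power_mult_distrib)
    also have "\<dots> < (D + 1) * (D + 1) ^ d" by simp
    also have "\<dots> = (D + 1) ^ Suc d" by simp
    also have "\<dots> \<le> (D + 1) ^ k" by (rule power_increasing) (use cardIK in \<open>auto simp: d_def k_def\<close>)
    finally show ?thesis by (simp add: card_box fI fK d_def k_def)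
  qed
  obtain c where c: "\<exists>\<alpha>\<in>box K D. c \<alpha> \<noteq> 0" "\<forall>\<beta>\<in>box I E. (\<Sum>\<alpha>\<in>box K D. M \<alpha> \<beta> * c \<alpha>) = 0"
    using linsys_nontrivial[OF finite_box[OF fI] finite_box[OF fK] cnt, of "\<lambda>\<beta> \<alpha>. M \<alpha> \<beta>"] by blast
  have "(\<Sum>\<alpha>\<in>box K D. c \<alpha> * mnm K \<alpha> (\<lambda>\<kappa>. f \<kappa> y)) = 0" for y
  proof -
    have "(\<Sum>\<alpha>\<in>box K D. c \<alpha> * mnm K \<alpha> (\<lambda>\<kappa>. f \<kappa> y)) = (\<Sum>\<alpha>\<in>box K D. c \<alpha> * (\<Sum>\<beta>\<in>box I E. M \<alpha> \<beta> * mnm I \<beta> y))"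
      using M unfolding F_def by (intro sum.cong) auto
    also have "\<dots> = (\<Sum>\<beta>\<in>box I E. (\<Sum>\<alpha>\<in>box K D. M \<alpha> \<beta> * c \<alpha>) * mnm I \<beta> y)"
      by (simp add: sum_distrib_left sum_distrib_right algebra_simps sum.swap[of _ "box K D"])
    also have "\<dots> = 0" using c(2) by simp
    finally show ?thesis .
  qed
  then show ?thesis using c(1) by blast
qed



section \<open>Polynomial functions on matrices\<close>

lemma pf_sum: "finite S \<Longrightarrow> (\<And>s. s \<in> S \<Longrightarrow> f s \<in> poly_fun m n) \<Longrightarrow> (\<lambda>A. \<Sum>s\<in>S. f s A) \<in> poly_fun m n"
proof (induction S rule: finite_induct)
  case empty then show ?case using poly_fun.pf_const[of 0] by simp
next
  case (insert x F)
  have "(\<lambda>A. f x A + (\<Sum>s\<in>F. f s A)) \<in> poly_fun m n" by (rule poly_fun.pf_add) (use insert in auto)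
  then show ?case using insert.hyps by simp
qed

lemma pf_prod: "finite S \<Longrightarrow> (\<And>s. s \<in> S \<Longrightarrow> f s \<in> poly_fun m n) \<Longrightarrow> (\<lambda>A. \<Prod>s\<in>S. f s A) \<in> poly_fun m n"
proof (induction S rule: finite_induct)
  case empty then show ?case using poly_fun.pf_const[of 1] by simp
next
  case (insert x F)
  have "(\<lambda>A. f x A * (\<Prod>s\<in>F. f s A)) \<in> poly_fun m n" by (rule poly_fun.pf_mult) (use insert in auto)
  then show ?case using insert.hyps by simp
qed

lemma pf_power: "f \<in> poly_fun m n \<Longrightarrow> (\<lambda>A. f A ^ j) \<in> poly_fun m n"
proof (induction j)
  case 0 then show ?case using poly_fun.pf_const[of 1] by simp
next
  case (Suc j)
  have "(\<lambda>A. f A * f A ^ j) \<in> poly_fun m n" by (rule poly_fun.pf_mult) (use Suc in auto)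
  then show ?case by simp
qed

lemma pf_subst:
  assumes "finite K" "brep K D P" "\<And>\<kappa>. \<kappa> \<in> K \<Longrightarrow> g \<kappa> \<in> poly_fun m n"
  shows "(\<lambda>A. P (\<lambda>\<kappa>. g \<kappa> A)) \<in> poly_fun m n"
proof -
  obtain c where c: "\<forall>y. P y = (\<Sum>\<alpha>\<in>box K D. c \<alpha> * mnm K \<alpha> y)" using assms(2) unfolding brep_def by blast
  have "(\<lambda>A. \<Sum>\<alpha>\<in>box K D. c \<alpha> * (\<Prod>\<kappa>\<in>K. g \<kappa> A ^ \<alpha> \<kappa>)) \<in> poly_fun m n"
    by (intro pf_sum pf_prod poly_fun.pf_mult poly_fun.pf_const pf_power assms(3) finite_box assms(1))
  then show ?thesis using c by (simp add: mnm_def)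
qed

lemma isP_subst:
  assumes "finite I" "finite K" "brep K D P" "\<And>\<kappa>. \<kappa> \<in> K \<Longrightarrow> isP I (f \<kappa>)"
  shows "isP I (\<lambda>y. P (\<lambda>\<kappa>. f \<kappa> y))"
proof -
  obtain c where c: "\<forall>y. P y = (\<Sum>\<alpha>\<in>box K D. c \<alpha> * mnm K \<alpha> y)" using assms(3) unfolding brep_def by blast
  have "isP I (\<lambda>y. \<Sum>\<alpha>\<in>box K D. c \<alpha> * (\<Prod>\<kappa>\<in>K. f \<kappa> y ^ \<alpha> \<kappa>))"
    by (intro isP_sum isP_prod isP_scale isP_power assms(4) finite_box assms(1,2))
  then show ?thesis using c by (simp add: mnm_def)
qed

lemma isP_pf_comp:
  assumes "g \<in> poly_fun m n" "finite I" "\<And>i j. i < m \<Longrightarrow> j < n \<Longrightarrow> isP I (\<lambda>y. \<phi> y $$ (i, j))"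
  shows "isP I (\<lambda>y. g (\<phi> y))"
  using assms(1)
proof (induction rule: poly_fun.induct)
  case (pf_const c) then show ?case using isP_const[OF assms(2)] by simp
next
  case (pf_var i j) then show ?case using assms(3) by simp
next
  case (pf_add f g) show ?case by (rule isP_add[OF assms(2) pf_add.IH])
next
  case (pf_mult f g) show ?case by (rule isP_mult[OF assms(2) pf_mult.IH])
qed

section \<open>Zariski closed sets\<close>

lemma closed_subset_carrier: "zariski_closed m n Z \<Longrightarrow> Z \<subseteq> carrier_mat m n"
  unfolding zariski_closed_def by auto

lemma closed_zero_set:
  assumes "zariski_closed m n Z" "f \<in> poly_fun m n"
  shows "zariski_closed m n {A \<in> Z. f A = 0}"
proof -
  obtain F where F: "F \<subseteq> poly_fun m n" "Z = {A \<in> carrier_mat m n. \<forall>f\<in>F. f A = 0}"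
    using assms(1) unfolding zariski_closed_def by blast
  have eq: "{A \<in> Z. f A = 0} = {A \<in> carrier_mat m n. \<forall>f\<in>insert f F. f A = 0}"
    unfolding F(2) by auto
  have sub: "insert f F \<subseteq> poly_fun m n" using F(1) assms(2) by simp
  show ?thesis unfolding zariski_closed_def by (rule exI[of _ "insert f F"]) (use eq sub in simp)
qed

lemma closed_carrier: "zariski_closed m n (carrier_mat m n)"
  unfolding zariski_closed_def by (rule exI[of _ "{}"]) auto

lemma closed_Inter:
  assumes "\<Z> \<noteq> {}" "\<forall>Z\<in>\<Z>. zariski_closed m n Z"
  shows "zariski_closed m n (\<Inter>\<Z>)"
proof -
  have "\<forall>Z\<in>\<Z>. \<exists>F. F \<subseteq> poly_fun m n \<and> Z = {A \<in> carrier_mat m n. \<forall>f\<in>F. f A = 0}"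
    using assms(2) unfolding zariski_closed_def by blast
  from bchoice[OF this] obtain FF where FF: "\<forall>Z\<in>\<Z>. FF Z \<subseteq> poly_fun m n \<and> Z = {A \<in> carrier_mat m n. \<forall>f\<in>FF Z. f A = 0}"
    by blast
  have "\<Inter>\<Z> = {A \<in> carrier_mat m n. \<forall>f\<in>(\<Union>Z\<in>\<Z>. FF Z). f A = 0}"
  proof
    show "\<Inter>\<Z> \<subseteq> {A \<in> carrier_mat m n. \<forall>f\<in>(\<Union>Z\<in>\<Z>. FF Z). f A = 0}"
    proof
      fix A assume A: "A \<in> \<Inter>\<Z>"
      obtain Z0 where "Z0 \<in> \<Z>" using assms(1) by blast
      then have "A \<in> carrier_mat m n" using A FF by blast
      moreover have "\<forall>f\<in>(\<Union>Z\<in>\<Z>. FF Z). f A = 0"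
      proof
        fix f assume "f \<in> (\<Union>Z\<in>\<Z>. FF Z)"
        then obtain Z where Z: "Z \<in> \<Z>" "f \<in> FF Z" by blast
        then have "A \<in> Z" using A by blast
        then show "f A = 0" using FF Z by blast
      qed
      ultimately show "A \<in> {A \<in> carrier_mat m n. \<forall>f\<in>(\<Union>Z\<in>\<Z>. FF Z). f A = 0}" by blast
    qed
    show "{A \<in> carrier_mat m n. \<forall>f\<in>(\<Union>Z\<in>\<Z>. FF Z). f A = 0} \<subseteq> \<Inter>\<Z>"
    proof
      fix A assume A: "A \<in> {A \<in> carrier_mat m n. \<forall>f\<in>(\<Union>Z\<in>\<Z>. FF Z). f A = 0}"
      show "A \<in> \<Inter>\<Z>"
      proof
        fix Z assume Z: "Z \<in> \<Z>"
        then have "\<forall>f\<in>FF Z. f A = 0" using A by blast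
        then show "A \<in> Z" using FF Z A by blast
      qed
    qed
  qed
  moreover have "(\<Union>Z\<in>\<Z>. FF Z) \<subseteq> poly_fun m n" using FF by blast
  ultimately show ?thesis unfolding zariski_closed_def by blast
qed

lemma closure_least: "zariski_closed m n Z \<Longrightarrow> S \<subseteq> Z \<Longrightarrow> zariski_closure m n S \<subseteq> Z"
  unfolding zariski_closure_def by blast

lemma closure_sup: "S \<subseteq> zariski_closure m n S"
  unfolding zariski_closure_def by blast

lemma closure_closed:
  assumes "S \<subseteq> carrier_mat m n"
  shows "zariski_closed m n (zariski_closure m n S)"
  unfolding zariski_closure_def
  by (rule closed_Inter) (use assms closed_carrier in auto)

lemma closure_carrier:
  assumes "S \<subseteq> carrier_mat m n"
  shows "zariski_closure m n S \<subseteq> carrier_mat m n"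
  using closure_least[OF closed_carrier assms] .

section \<open>Independence and the chain argument\<close>

definition indep :: "nat \<Rightarrow> nat \<Rightarrow> complex mat set \<Rightarrow> nat \<Rightarrow> (nat \<Rightarrow> complex mat \<Rightarrow> complex) \<Rightarrow> bool" where
  "indep m n S k g \<longleftrightarrow> (\<forall>P D. brep {..<k} D P \<longrightarrow> (\<forall>A\<in>S. P (\<lambda>i. g i A) = 0) \<longrightarrow> (\<forall>y. P y = 0))"

definition dep_bound :: "nat \<Rightarrow> nat \<Rightarrow> complex mat set \<Rightarrow> nat \<Rightarrow> bool" where
  "dep_bound m n S d \<longleftrightarrow> (\<forall>k g. d < k \<longrightarrow> (\<forall>i<k. g i \<in> poly_fun m n) \<longrightarrow> \<not> indep m n S k g)"

lemma indep_base:
  assumes "Z \<noteq> {}"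
  shows "indep m n Z 0 g"
  unfolding indep_def
proof (intro allI impI)
  fix P :: "(nat \<Rightarrow> complex) \<Rightarrow> complex" and D y
  assume P: "brep {..<0} D P" and Z: "\<forall>A\<in>Z. P (\<lambda>i. g i A) = 0"
  obtain A where "A \<in> Z" using assms by blast
  then have "P (\<lambda>i. g i A) = 0" using Z by blast
  moreover have "P y = P (\<lambda>i. g i A)" by (rule brep_local[OF P]) auto
  ultimately show "P y = 0" by simp
qed

lemma indep_step:
  assumes W: "zariski_irreducible m n W" and Zc: "zariski_closed m n Z" and ZW: "Z \<subset> W"
    and ind: "indep m n Z k g" and gpf: "\<forall>i<k. g i \<in> poly_fun m n"
  shows "\<exists>a\<in>poly_fun m n. indep m n W (Suc k) (g(k := a))"
proof -
  obtain F where F: "F \<subseteq> poly_fun m n" "Z = {A \<in> carrier_mat m n. \<forall>f\<in>F. f A = 0}"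
    using Zc unfolding zariski_closed_def by blast
  have Wc: "zariski_closed m n W" using W unfolding zariski_irreducible_def by blast
  obtain A0 where A0: "A0 \<in> W" "A0 \<notin> Z" using ZW by blast
  have "A0 \<in> carrier_mat m n" using closed_subset_carrier[OF Wc] A0 by blast
  then obtain a where a: "a \<in> F" "a A0 \<noteq> 0" using A0 F by blast
  have apf: "a \<in> poly_fun m n" using a F by blast
  have aZ: "\<forall>A\<in>Z. a A = 0" using a F by blast
  define g' where "g' = g(k := a)"
  have "indep m n W (Suc k) g'"
    unfolding indep_def
  proof (intro allI impI)
    fix P :: "(nat \<Rightarrow> complex) \<Rightarrow> complex" and D y
    assume P: "brep {..<Suc k} D P" and PW: "\<forall>A\<in>W. P (\<lambda>i. g' i A) = 0"
    show "P y = 0"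
    proof (rule ccontr)
      assume Py: "P y \<noteq> 0"
      obtain c where c: "\<forall>y. P y = (\<Sum>\<alpha>\<in>box {..<Suc k} D. c \<alpha> * mnm {..<Suc k} \<alpha> y)"
        using P unfolding brep_def by blast
      define C where "C = (\<lambda>j y. \<Sum>\<alpha>\<in>box {..<k} D. c (\<alpha>(k := j)) * mnm {..<k} \<alpha> y)"
      have Cb: "brep {..<k} D (C j)" for j unfolding brep_def C_def by (rule exI[of _ "\<lambda>\<alpha>. c (\<alpha>(k := j))"]) simp
      have Pdec: "P y = (\<Sum>j\<le>D. C j y * y k ^ j)" for y
        using c box_insert_sum[where K="{..<k}" and v=k and D=D and c=c and y=y] by (simp add: C_def lessThan_Suc)
      have "\<exists>j\<le>D. \<not> (\<forall>y. C j y = 0)"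
      proof (rule ccontr)
        assume "\<not> ?thesis"
        then have "P y = 0" using Pdec[of y] by simp
        then show False using Py by simp
      qed
      define j0 where "j0 = (LEAST j. j \<le> D \<and> \<not> (\<forall>y. C j y = 0))"
      have j0: "j0 \<le> D" "\<not> (\<forall>y. C j0 y = 0)"
        using LeastI_ex[OF \<open>\<exists>j\<le>D. \<not> (\<forall>y. C j y = 0)\<close>] unfolding j0_def by blast+
      have below: "C j y = 0" if "j < j0" for j y
      proof -
        have "\<not> (j \<le> D \<and> \<not> (\<forall>y. C j y = 0))" using not_less_Least[OF that[unfolded j0_def]] .
        then show ?thesis using that j0(1) by auto
      qed
      have Cg: "C j (\<lambda>i. g' i A) = C j (\<lambda>i. g i A)" for j A
        by (rule brep_local[OF Cb]) (auto simp: g'_def)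
      define R where "R = (\<lambda>A. \<Sum>j\<in>{j0..D}. C j (\<lambda>i. g i A) * a A ^ (j - j0))"
      have Rpf: "R \<in> poly_fun m n"
        unfolding R_def
        by (intro pf_sum poly_fun.pf_mult pf_power apf pf_subst[OF _ Cb]) (use gpf in auto)
      have fact: "a A ^ j0 * R A = 0" if "A \<in> W" for A
      proof -
        have "0 = P (\<lambda>i. g' i A)" using PW that by simp
        also have "\<dots> = (\<Sum>j\<le>D. C j (\<lambda>i. g i A) * a A ^ j)" using Pdec Cg by (simp add: g'_def)
        also have "\<dots> = (\<Sum>j\<in>{..<j0} \<union> {j0..D}. C j (\<lambda>i. g i A) * a A ^ j)"
          using j0(1) by (intro sum.cong) auto
        also have "\<dots> = (\<Sum>j\<in>{..<j0}. C j (\<lambda>i. g i A) * a A ^ j) + (\<Sum>j\<in>{j0..D}. C j (\<lambda>i. g i A) * a A ^ j)"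
          by (rule sum.union_disjoint) auto
        also have "(\<Sum>j\<in>{..<j0}. C j (\<lambda>i. g i A) * a A ^ j) = 0" using below by simp
        also have "(\<Sum>j\<in>{j0..D}. C j (\<lambda>i. g i A) * a A ^ j) = (\<Sum>j\<in>{j0..D}. a A ^ j0 * (C j (\<lambda>i. g i A) * a A ^ (j - j0)))"
        proof (rule sum.cong[OF refl])
          fix j assume "j \<in> {j0..D}"
          then have "a A ^ j = a A ^ j0 * a A ^ (j - j0)" by (simp add: power_add[symmetric])
          then show "C j (\<lambda>i. g i A) * a A ^ j = a A ^ j0 * (C j (\<lambda>i. g i A) * a A ^ (j - j0))" by simp
        qed
        also have "\<dots> = a A ^ j0 * R A" by (simp add: R_def sum_distrib_left)
        finally show ?thesis by simp
      qed
      define W1 where "W1 = {A \<in> W. a A = 0}"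
      define W2 where "W2 = {A \<in> W. R A = 0}"
      have "W = W1 \<union> W2" using fact by (auto simp: W1_def W2_def)
      moreover have "zariski_closed m n W1" "zariski_closed m n W2"
        unfolding W1_def W2_def using closed_zero_set[OF Wc] apf Rpf by auto
      ultimately have "W = W1 \<or> W = W2" using W unfolding zariski_irreducible_def by blast
      moreover have "W \<noteq> W1" using A0 a(2) by (auto simp: W1_def)
      ultimately have RW: "\<forall>A\<in>W. R A = 0" by (auto simp: W2_def)
      have "C j0 (\<lambda>i. g i A) = 0" if "A \<in> Z" for A
      proof -
        have aA: "a A = 0" using aZ that by blast
        have "R A = (\<Sum>j\<in>insert j0 {Suc j0..D}. C j (\<lambda>i. g i A) * a A ^ (j - j0))"
          unfolding R_def using j0(1) by (intro sum.cong) auto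
        also have "\<dots> = C j0 (\<lambda>i. g i A)" using aA by (simp add: zero_power)
        finally show ?thesis using RW that ZW by auto
      qed
      then have "\<forall>y. C j0 y = 0" using ind Cb unfolding indep_def by blast
      then show False using j0(2) by blast
    qed
  qed
  then show ?thesis using apf unfolding g'_def by blast
qed

lemma indep_mono: "indep m n Z k g \<Longrightarrow> Z \<subseteq> V \<Longrightarrow> indep m n V k g"
  unfolding indep_def by blast

lemma zdim_le:
  assumes "dep_bound m n V d"
  shows "zdim m n V \<le> enat d"
  unfolding zdim_def
proof (rule Sup_least)
  fix x assume "x \<in> {enat k |k. \<exists>Z. (\<forall>i\<le>k. zariski_irreducible m n (Z i) \<and> Z i \<subseteq> V) \<and> (\<forall>i<k. Z i \<subset> Z (Suc i))}"
  then obtain k Z where x: "x = enat k" and Z: "\<forall>i\<le>k. zariski_irreducible m n (Z i) \<and> Z i \<subseteq> V"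
    "\<forall>i<k. Z i \<subset> Z (Suc i)" by blast
  have "\<exists>g. (\<forall>i<j. g i \<in> poly_fun m n) \<and> indep m n (Z j) j g" if "j \<le> k" for j
    using that
  proof (induction j)
    case 0
    have "Z 0 \<noteq> {}" using Z(1) unfolding zariski_irreducible_def by auto
    then show ?case using indep_base by blast
  next
    case (Suc j)
    then obtain g where g: "\<forall>i<j. g i \<in> poly_fun m n" "indep m n (Z j) j g" by auto
    have "zariski_closed m n (Z j)" using Z(1) Suc.prems unfolding zariski_irreducible_def by auto
    then obtain a where "a \<in> poly_fun m n" "indep m n (Z (Suc j)) (Suc j) (g(j := a))"
      using indep_step[of m n "Z (Suc j)" "Z j" j g] Z Suc.prems g by auto
    moreover have "\<forall>i<Suc j. (g(j := a)) i \<in> poly_fun m n" using g(1) \<open>a \<in> poly_fun m n\<close> by auto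
    ultimately show ?case by blast
  qed
  then obtain g where g: "\<forall>i<k. g i \<in> poly_fun m n" "indep m n (Z k) k g" by blast
  then have "indep m n V k g" using indep_mono Z(1) by blast
  then have "\<not> d < k" using assms g(1) unfolding dep_bound_def by blast
  then show "x \<le> enat d" using x by simp
qed



lemma not_indep_iff:
  "\<not> indep m n S k g \<longleftrightarrow> (\<exists>P D. brep {..<k} D P \<and> (\<forall>A\<in>S. P (\<lambda>i. g i A) = 0) \<and> (\<exists>y. P y \<noteq> 0))"
  unfolding indep_def by blast

lemma dep_bound_subset: "dep_bound m n S d \<Longrightarrow> S' \<subseteq> S \<Longrightarrow> dep_bound m n S' d"
  unfolding dep_bound_def using indep_mono by blast

lemma dep_bound_mono_d: "dep_bound m n S d \<Longrightarrow> d \<le> d' \<Longrightarrow> dep_bound m n S d'"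
  unfolding dep_bound_def by auto

lemma dep_bound_closure:
  assumes "S \<subseteq> carrier_mat m n" "dep_bound m n S d"
  shows "dep_bound m n (zariski_closure m n S) d"
  unfolding dep_bound_def
proof (intro allI impI)
  fix k g assume k: "d < k" and g: "\<forall>i<k. g i \<in> poly_fun m n"
  then have "\<not> indep m n S k g" using assms(2) unfolding dep_bound_def by blast
  then obtain P D y where P: "brep {..<k} D P" "\<forall>A\<in>S. P (\<lambda>i. g i A) = 0" "P y \<noteq> 0"
    unfolding not_indep_iff by blast
  define h where "h = (\<lambda>A. P (\<lambda>i. g i A))"
  have hpf: "h \<in> poly_fun m n" unfolding h_def by (rule pf_subst[OF _ P(1)]) (use g in auto)
  have "zariski_closed m n {A \<in> carrier_mat m n. h A = 0}"
    using closed_zero_set[OF closed_carrier hpf] .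
  moreover have "S \<subseteq> {A \<in> carrier_mat m n. h A = 0}" using assms(1) P(2) by (auto simp: h_def)
  ultimately have "zariski_closure m n S \<subseteq> {A \<in> carrier_mat m n. h A = 0}" by (rule closure_least)
  then have "\<forall>A\<in>zariski_closure m n S. P (\<lambda>i. g i A) = 0" by (auto simp: h_def)
  then show "\<not> indep m n (zariski_closure m n S) k g" unfolding not_indep_iff using P by blast
qed

lemma dep_bound_Un:
  assumes "dep_bound m n S1 d" "dep_bound m n S2 d"
  shows "dep_bound m n (S1 \<union> S2) d"
  unfolding dep_bound_def
proof (intro allI impI)
  fix k g assume k: "d < k" and g: "\<forall>i<k. g i \<in> poly_fun m n"
  obtain P1 D1 y1 where P1: "brep {..<k} D1 P1" "\<forall>A\<in>S1. P1 (\<lambda>i. g i A) = 0" "P1 y1 \<noteq> 0"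
    using assms(1) k g unfolding dep_bound_def not_indep_iff by blast
  obtain P2 D2 y2 where P2: "brep {..<k} D2 P2" "\<forall>A\<in>S2. P2 (\<lambda>i. g i A) = 0" "P2 y2 \<noteq> 0"
    using assms(2) k g unfolding dep_bound_def not_indep_iff by blast
  have b: "brep {..<k} (D1 + D2) (\<lambda>y. P1 y * P2 y)" by (rule brep_mult[OF _ P1(1) P2(1)]) simp
  obtain y where "P1 y \<noteq> 0 \<and> P2 y \<noteq> 0"
    using isP_domain[of "{..<k}" P1 P2 y1 y2] P1(1,3) P2(1,3) unfolding isP_def by blast
  then have "P1 y * P2 y \<noteq> 0" by simp
  moreover have "\<forall>A\<in>S1 \<union> S2. P1 (\<lambda>i. g i A) * P2 (\<lambda>i. g i A) = 0" using P1(2) P2(2) by auto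
  ultimately show "\<not> indep m n (S1 \<union> S2) k g" unfolding not_indep_iff using b by blast
qed

lemma dep_bound_empty: "dep_bound m n {} d"
  unfolding dep_bound_def not_indep_iff
proof (intro allI impI)
  fix k :: nat and g :: "nat \<Rightarrow> complex mat \<Rightarrow> complex"
  have "brep {..<k} 0 (\<lambda>y. 1)" by (rule brep_const) simp
  then show "\<exists>P D. brep {..<k} D P \<and> (\<forall>A\<in>{}. P (\<lambda>i. g i A) = 0) \<and> (\<exists>y. P y \<noteq> 0)" by auto
qed

lemma dep_bound_UN:
  assumes "finite X" "\<And>x. x \<in> X \<Longrightarrow> dep_bound m n (S x) d"
  shows "dep_bound m n (\<Union>x\<in>X. S x) d"
  using assms
proof (induction X rule: finite_induct)
  case empty then show ?case using dep_bound_empty by simp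
next
  case (insert x F)
  then show ?case using dep_bound_Un[of m n "S x" d "\<Union>x\<in>F. S x"] by simp
qed

lemma dep_bound_param:
  assumes fI: "finite I" and cI: "card I \<le> d"
    and ent: "\<And>i j. i < m \<Longrightarrow> j < n \<Longrightarrow> isP I (\<lambda>y. \<phi> y $$ (i, j))"
  shows "dep_bound m n (\<phi> ` T) d"
  unfolding dep_bound_def
proof (intro allI impI)
  fix k g assume k: "d < k" and g: "\<forall>i<k. g i \<in> poly_fun m n"
  define f where "f = (\<lambda>\<kappa> y. g \<kappa> (\<phi> y))"
  have fP: "\<forall>\<kappa>\<in>{..<k}. isP I (f \<kappa>)"
    unfolding f_def using isP_pf_comp[OF _ fI ent] g by blast
  obtain D c where c: "\<exists>\<alpha>\<in>box {..<k} D. c \<alpha> \<noteq> 0"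
    "\<forall>y. (\<Sum>\<alpha>\<in>box {..<k} D. c \<alpha> * mnm {..<k} \<alpha> (\<lambda>\<kappa>. f \<kappa> y)) = 0"
    using alg_dep[OF fI finite_lessThan _ fP] cI k by auto
  define P where "P = (\<lambda>z. \<Sum>\<alpha>\<in>box {..<k} D. c \<alpha> * mnm {..<k} \<alpha> z)"
  have Pb: "brep {..<k} D P" unfolding P_def brep_def by blast
  have "\<exists>y. P y \<noteq> 0"
  proof (rule ccontr)
    assume "\<not> (\<exists>y. P y \<noteq> 0)"
    then have "\<forall>y. (\<Sum>\<alpha>\<in>box {..<k} D. c \<alpha> * mnm {..<k} \<alpha> y) = 0" unfolding P_def by simp
    then show False using mnm_indep[OF finite_lessThan] c(1) by blast
  qed
  moreover have "\<forall>A\<in>\<phi> ` T. P (\<lambda>i. g i A) = 0" using c(2) unfolding P_def f_def by auto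
  ultimately show "\<not> indep m n (\<phi> ` T) k g" unfolding not_indep_iff using Pb by blast
qed

lemma dep_bound_dense:
  assumes fI: "finite I"
    and ent: "\<And>i j. i < m \<Longrightarrow> j < n \<Longrightarrow> isP I (\<lambda>y. \<phi> y $$ (i, j))"
    and H: "isP I H" "H y0 \<noteq> 0"
    and db: "dep_bound m n (\<phi> ` {y. H y \<noteq> 0}) d"
  shows "dep_bound m n (range \<phi>) d"
  unfolding dep_bound_def
proof (intro allI impI)
  fix k g assume k: "d < k" and g: "\<forall>i<k. g i \<in> poly_fun m n"
  obtain P D y1 where P: "brep {..<k} D P" "\<forall>A\<in>\<phi> ` {y. H y \<noteq> 0}. P (\<lambda>i. g i A) = 0" "P y1 \<noteq> 0"
    using db k g unfolding dep_bound_def not_indep_iff by blast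
  define Q where "Q = (\<lambda>y. P (\<lambda>i. g i (\<phi> y)))"
  have Q: "isP I Q" unfolding Q_def
    by (rule isP_subst[OF fI finite_lessThan P(1)]) (use isP_pf_comp[OF _ fI ent] g in auto)
  have "Q y = 0" for y
  proof (rule ccontr)
    assume "Q y \<noteq> 0"
    then obtain y' where "Q y' \<noteq> 0" "H y' \<noteq> 0" using isP_domain[OF fI Q H(1) _ H(2)] by blast
    then show False using P(2) unfolding Q_def by auto
  qed
  then have "\<forall>A\<in>range \<phi>. P (\<lambda>i. g i A) = 0" unfolding Q_def by auto
  then show "\<not> indep m n (range \<phi>) k g" unfolding not_indep_iff using P by blast
qed



type_synonym vv = "(nat \<times> nat) + (nat \<times> nat)"

definition phi :: "nat \<Rightarrow> nat \<Rightarrow> nat list \<Rightarrow> (vv \<Rightarrow> complex) \<Rightarrow> complex mat" where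
  "phi m n js y = mat m n (\<lambda>(i, l). if l \<in> set js then y (Inl (i, l))
      else (\<Sum>t<length js. y (Inr (t, l)) * y (Inl (i, js ! t))))"

definition Ivars :: "nat \<Rightarrow> nat \<Rightarrow> nat list \<Rightarrow> vv set" where
  "Ivars m n js = Inl ` ({..<m} \<times> set js) \<union> Inr ` ({..<length js} \<times> ({..<n} - set js))"

definition Fixed :: "nat \<Rightarrow> nat \<Rightarrow> nat list \<Rightarrow> vv set" where
  "Fixed m n js = Inl ` ({..<m} \<times> {js ! 0} \<union> {0} \<times> set js) \<union> Inr ` ({0} \<times> ({..<n} - set js))"

definition hprod :: "nat \<Rightarrow> nat \<Rightarrow> nat list list \<Rightarrow> (nat \<times> vv \<Rightarrow> complex) \<Rightarrow> complex mat" where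
  "hprod m n Js y = mat m n (\<lambda>(i, l). \<Prod>p<length Js. phi m n (Js ! p) (\<lambda>v. y (p, v)) $$ (i, l))"

definition Iall :: "nat \<Rightarrow> nat \<Rightarrow> nat list list \<Rightarrow> (nat \<times> vv) set" where
  "Iall m n Js = Sigma {..<length Js} (\<lambda>p. Ivars m n (Js ! p))"

definition Inorm :: "nat \<Rightarrow> nat \<Rightarrow> nat list list \<Rightarrow> (nat \<times> vv) set" where
  "Inorm m n Js = Sigma {..<length Js} (\<lambda>p. if p = 0 then Ivars m n (Js ! p) else Ivars m n (Js ! p) - Fixed m n (Js ! p))"

definition fixup :: "nat \<Rightarrow> nat \<Rightarrow> nat list list \<Rightarrow> (nat \<times> vv \<Rightarrow> complex) \<Rightarrow> (nat \<times> vv \<Rightarrow> complex)" where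
  "fixup m n Js z = (\<lambda>(p, v). if p \<noteq> 0 \<and> v \<in> Fixed m n (Js ! p) then 1 else z (p, v))"

definition Fall :: "nat \<Rightarrow> nat \<Rightarrow> nat list list \<Rightarrow> (nat \<times> vv) set" where
  "Fall m n Js = Sigma {1..<length Js} (\<lambda>p. Fixed m n (Js ! p))"

definition Hgen :: "nat \<Rightarrow> nat \<Rightarrow> nat list list \<Rightarrow> (nat \<times> vv \<Rightarrow> complex) \<Rightarrow> complex" where
  "Hgen m n Js y = (\<Prod>\<kappa>\<in>Fall m n Js. y \<kappa>)"

lemma phi_entry: "i < m \<Longrightarrow> l < n \<Longrightarrow> phi m n js y $$ (i, l) = (if l \<in> set js then y (Inl (i, l))
      else (\<Sum>t<length js. y (Inr (t, l)) * y (Inl (i, js ! t))))"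
  by (simp add: phi_def)

lemma phi_carrier[simp]: "phi m n js y \<in> carrier_mat m n"
  by (simp add: phi_def)

lemma hprod_entry: "i < m \<Longrightarrow> l < n \<Longrightarrow> hprod m n Js y $$ (i, l) = (\<Prod>p<length Js. phi m n (Js ! p) (\<lambda>v. y (p, v)) $$ (i, l))"
  by (simp add: hprod_def)

lemma hprod_carrier[simp]: "hprod m n Js y \<in> carrier_mat m n"
  by (simp add: hprod_def)

lemma finite_Ivars[simp]: "finite (Ivars m n js)"
  by (simp add: Ivars_def)

lemma finite_Fixed[simp]: "finite (Fixed m n js)"
  by (simp add: Fixed_def)

lemma finite_Iall[simp]: "finite (Iall m n Js)"
  by (simp add: Iall_def)

lemma finite_Inorm[simp]: "finite (Inorm m n Js)"
  by (simp add: Inorm_def)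

lemma finite_Fall[simp]: "finite (Fall m n Js)"
  by (simp add: Fall_def)

lemma isP_phi:
  assumes "i < m" "l < n"
  shows "isP (Ivars m n js) (\<lambda>y. phi m n js y $$ (i, l))"
proof (cases "l \<in> set js")
  case True
  have "isP (Ivars m n js) (\<lambda>y. y (Inl (i, l)))"
    by (rule isP_var) (use assms True in \<open>auto simp: Ivars_def\<close>)
  then show ?thesis using assms True by (simp add: phi_entry)
next
  case False
  have "isP (Ivars m n js) (\<lambda>y. \<Sum>t<length js. y (Inr (t, l)) * y (Inl (i, js ! t)))"
  proof (rule isP_sum)
    fix t assume t: "t \<in> {..<length js}"
    have "Inr (t, l) \<in> Ivars m n js" "Inl (i, js ! t) \<in> Ivars m n js"
      using assms False t by (auto simp: Ivars_def)
    then show "isP (Ivars m n js) (\<lambda>y. y (Inr (t, l)) * y (Inl (i, js ! t)))"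
      by (intro isP_mult[OF finite_Ivars] isP_var[OF finite_Ivars])
  qed auto
  then show ?thesis using assms False by (simp add: phi_entry)
qed

lemma isP_hprod:
  assumes "i < m" "l < n"
  shows "isP (Iall m n Js) (\<lambda>y. hprod m n Js y $$ (i, l))"
proof -
  have "isP (Iall m n Js) (\<lambda>y. \<Prod>p<length Js. phi m n (Js ! p) (\<lambda>v. y (p, v)) $$ (i, l))"
  proof (rule isP_prod)
    fix p assume p: "p \<in> {..<length Js}"
    obtain D where D: "brep (Ivars m n (Js ! p)) D (\<lambda>y. phi m n (Js ! p) y $$ (i, l))"
      using isP_phi[OF assms] unfolding isP_def by blast
    show "isP (Iall m n Js) (\<lambda>y. phi m n (Js ! p) (\<lambda>v. y (p, v)) $$ (i, l))"
      using isP_subst[OF finite_Iall finite_Ivars D, where f="\<lambda>v y. y (p, v)"]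
        isP_var[OF finite_Iall] p by (auto simp: Iall_def)
  qed auto
  then show ?thesis using assms by (simp add: hprod_entry)
qed

lemma Fixed_sub:
  assumes "0 < m" "js \<noteq> []"
  shows "Fixed m n js \<subseteq> Ivars m n js"
  using assms unfolding Fixed_def Ivars_def by auto

lemma isP_fixup_hprod:
  assumes "i < m" "l < n"
  shows "isP (Inorm m n Js) (\<lambda>z. hprod m n Js (fixup m n Js z) $$ (i, l))"
proof -
  obtain D where D: "brep (Iall m n Js) D (\<lambda>y. hprod m n Js y $$ (i, l))"
    using isP_hprod[OF assms] unfolding isP_def by blast
  have "isP (Inorm m n Js) (\<lambda>z. hprod m n Js (\<lambda>\<kappa>. fixup m n Js z \<kappa>) $$ (i, l))"
  proof (rule isP_subst[OF finite_Inorm finite_Iall D])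
    fix \<kappa> assume k: "\<kappa> \<in> Iall m n Js"
    obtain p v where pv: "\<kappa> = (p, v)" by fastforce
    show "isP (Inorm m n Js) (\<lambda>z. fixup m n Js z \<kappa>)"
    proof (cases "p \<noteq> 0 \<and> v \<in> Fixed m n (Js ! p)")
      case True
      then show ?thesis using isP_const[OF finite_Inorm, where a=1] by (simp add: fixup_def pv)
    next
      case False
      then have "\<kappa> \<in> Inorm m n Js" using k pv by (auto simp: Iall_def Inorm_def)
      have "(\<lambda>z. fixup m n Js z \<kappa>) = (\<lambda>z. z (p, v))" using False by (auto simp: fixup_def pv)
      then show ?thesis using isP_var[OF finite_Inorm \<open>\<kappa> \<in> Inorm m n Js\<close>] pv by simp
    qed
  qed
  then show ?thesis by simp
qed

lemma isP_Hgen: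
  assumes "0 < m" "\<forall>p<length Js. Js ! p \<noteq> []"
  shows "isP (Iall m n Js) (Hgen m n Js)"
proof -
  have "Fall m n Js \<subseteq> Iall m n Js"
  proof
    fix \<kappa> assume "\<kappa> \<in> Fall m n Js"
    then obtain p v where pv: "\<kappa> = (p, v)" "p \<in> {1..<length Js}" "v \<in> Fixed m n (Js ! p)"
      unfolding Fall_def by blast
    then have "Js ! p \<noteq> []" using assms(2) by auto
    then have "v \<in> Ivars m n (Js ! p)" using Fixed_sub[OF assms(1)] pv(3) by blast
    then show "\<kappa> \<in> Iall m n Js" using pv unfolding Iall_def by auto
  qed
  then have "isP (Iall m n Js) (\<lambda>y. \<Prod>\<kappa>\<in>Fall m n Js. y \<kappa>)"
    by (intro isP_prod isP_var) auto
  then show ?thesis unfolding Hgen_def by simp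
qed

lemma scale1:
  assumes "set js \<subseteq> {..<n}" "\<forall>l<n. b l \<noteq> 0"
  shows "\<exists>y'. \<forall>i<m. \<forall>l<n. phi m n js y' $$ (i, l) = a i * b l * phi m n js y $$ (i, l)"
proof -
  define y' where "y' = (\<lambda>v. case v of Inl (i, j) \<Rightarrow> a i * b j * y (Inl (i, j))
                     | Inr (t, l) \<Rightarrow> y (Inr (t, l)) * b l / b (js ! t))"
  have "phi m n js y' $$ (i, l) = a i * b l * phi m n js y $$ (i, l)" if il: "i < m" "l < n" for i l
  proof (cases "l \<in> set js")
    case True then show ?thesis using il by (simp add: phi_entry y'_def)
  next
    case False
    have "(\<Sum>t<length js. y' (Inr (t, l)) * y' (Inl (i, js ! t)))
        = (\<Sum>t<length js. a i * b l * (y (Inr (t, l)) * y (Inl (i, js ! t))))"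
    proof (rule sum.cong[OF refl])
      fix t assume "t \<in> {..<length js}"
      then have "b (js ! t) \<noteq> 0" using assms nth_mem by blast
      then show "y' (Inr (t, l)) * y' (Inl (i, js ! t)) = a i * b l * (y (Inr (t, l)) * y (Inl (i, js ! t)))"
        by (simp add: y'_def field_simps)
    qed
    then show ?thesis using il False by (simp add: phi_entry sum_distrib_left)
  qed
  then show ?thesis by blast
qed

lemma norm1:
  assumes js: "set js \<subseteq> {..<n}" "js \<noteq> []" and m: "0 < m"
    and nz: "\<forall>v\<in>Fixed m n js. y v \<noteq> 0"
  shows "\<exists>a b y'. (\<forall>l<n. b l \<noteq> 0) \<and> (\<forall>v\<in>Fixed m n js. y' v = 1) \<and>
     (\<forall>i<m. \<forall>l<n. phi m n js y $$ (i, l) = a i * b l * phi m n js y' $$ (i, l))"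
proof -
  define j1 where "j1 = js ! 0"
  have j1: "j1 \<in> set js" using js(2) unfolding j1_def by simp
  define a where "a = (\<lambda>i. y (Inl (i, j1)))"
  define b where "b = (\<lambda>l. if l \<in> set js then y (Inl (0, l)) / y (Inl (0, j1)) else y (Inr (0, l)))"
  define y' where "y' = (\<lambda>v. case v of Inl (i, j) \<Rightarrow> y (Inl (i, j)) / (a i * b j)
                     | Inr (t, l) \<Rightarrow> y (Inr (t, l)) * b (js ! t) / b l)"
  have a0: "a i \<noteq> 0" if "i < m" for i
    using nz that unfolding a_def Fixed_def j1_def by auto
  have y0: "y (Inl (0, j)) \<noteq> 0" if "j \<in> set js" for j
    using nz that unfolding Fixed_def by auto
  have yr: "y (Inr (0, l)) \<noteq> 0" if "l < n" "l \<notin> set js" for l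
    using nz that unfolding Fixed_def by auto
  have b0: "b l \<noteq> 0" if "l < n" for l
    using y0 yr that j1 unfolding b_def by auto
  have bj1: "b j1 = 1" using y0[OF j1] j1 by (simp add: b_def)
  have fixed: "y' v = 1" if "v \<in> Fixed m n js" for v
  proof -
    from that consider (A) i where "i < m" "v = Inl (i, j1)" | (B) j where "j \<in> set js" "v = Inl (0, j)"
      | (C) l where "l < n" "l \<notin> set js" "v = Inr (0, l)"
      unfolding Fixed_def j1_def by blast
    then show ?thesis
    proof cases
      case (A i) then show ?thesis using a0[OF A(1)] bj1 by (simp add: y'_def a_def)
    next
      case (B j)
      then show ?thesis using y0[OF B(1)] y0[OF j1] by (simp add: y'_def a_def b_def)
    next
      case (C l)
      then show ?thesis using yr[OF C(1,2)] bj1 by (simp add: y'_def b_def j1_def)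
    qed
  qed
  have ent: "phi m n js y $$ (i, l) = a i * b l * phi m n js y' $$ (i, l)" if il: "i < m" "l < n" for i l
  proof (cases "l \<in> set js")
    case True then show ?thesis using il a0[OF il(1)] b0[OF il(2)] by (simp add: phi_entry y'_def)
  next
    case False
    have "(\<Sum>t<length js. y (Inr (t, l)) * y (Inl (i, js ! t)))
        = (\<Sum>t<length js. a i * b l * (y' (Inr (t, l)) * y' (Inl (i, js ! t))))"
    proof (rule sum.cong[OF refl])
      fix t assume "t \<in> {..<length js}"
      then have "js ! t < n" using js(1) nth_mem by blast
      then have "b (js ! t) \<noteq> 0" using b0 by blast
      then show "y (Inr (t, l)) * y (Inl (i, js ! t)) = a i * b l * (y' (Inr (t, l)) * y' (Inl (i, js ! t)))"
        using a0[OF il(1)] b0[OF il(2)] by (simp add: y'_def field_simps)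
    qed
    then show ?thesis using il False by (simp add: phi_entry sum_distrib_left)
  qed
  show ?thesis using b0 fixed ent by blast
qed



lemma hprod_norm:
  assumes Js: "Js \<noteq> []" "\<forall>p<length Js. set (Js ! p) \<subseteq> {..<n} \<and> Js ! p \<noteq> []"
    and m: "0 < m" and H: "Hgen m n Js y \<noteq> 0"
  shows "\<exists>z. hprod m n Js y = hprod m n Js (fixup m n Js z)"
proof -
  define s where "s = length Js"
  define S1 where "S1 = {1..<s}"
  have nzp: "\<forall>v\<in>Fixed m n (Js ! p). y (p, v) \<noteq> 0" if "p \<in> S1" for p
  proof
    fix v assume "v \<in> Fixed m n (Js ! p)"
    then have "(p, v) \<in> Fall m n Js" using that unfolding Fall_def S1_def s_def by auto
    then show "y (p, v) \<noteq> 0" using H unfolding Hgen_def by simp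
  qed
  have ex: "\<forall>p\<in>S1. \<exists>a b y'. (\<forall>l<n. b l \<noteq> 0) \<and> (\<forall>v\<in>Fixed m n (Js ! p). y' v = 1) \<and>
     (\<forall>i<m. \<forall>l<n. phi m n (Js ! p) (\<lambda>v. y (p, v)) $$ (i, l) = a i * b l * phi m n (Js ! p) y' $$ (i, l))"
  proof
    fix p assume p: "p \<in> S1"
    then have "p < length Js" unfolding S1_def s_def by auto
    then have a: "set (Js ! p) \<subseteq> {..<n}" and b: "Js ! p \<noteq> []" using Js(2) by auto
    show "\<exists>a b y'. (\<forall>l<n. b l \<noteq> 0) \<and> (\<forall>v\<in>Fixed m n (Js ! p). y' v = 1) \<and>
     (\<forall>i<m. \<forall>l<n. phi m n (Js ! p) (\<lambda>v. y (p, v)) $$ (i, l) = a i * b l * phi m n (Js ! p) y' $$ (i, l))"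
      by (rule norm1[OF a b m nzp[OF p]])
  qed
  from bchoice[OF ex] obtain A where "\<forall>p\<in>S1. \<exists>b y'. (\<forall>l<n. b l \<noteq> 0) \<and> (\<forall>v\<in>Fixed m n (Js ! p). y' v = 1) \<and>
     (\<forall>i<m. \<forall>l<n. phi m n (Js ! p) (\<lambda>v. y (p, v)) $$ (i, l) = A p i * b l * phi m n (Js ! p) y' $$ (i, l))" by blast
  from bchoice[OF this] obtain B where "\<forall>p\<in>S1. \<exists>y'. (\<forall>l<n. B p l \<noteq> 0) \<and> (\<forall>v\<in>Fixed m n (Js ! p). y' v = 1) \<and>
     (\<forall>i<m. \<forall>l<n. phi m n (Js ! p) (\<lambda>v. y (p, v)) $$ (i, l) = A p i * B p l * phi m n (Js ! p) y' $$ (i, l))" by blast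
  from bchoice[OF this] obtain Y where Y: "\<forall>p\<in>S1. (\<forall>l<n. B p l \<noteq> 0) \<and> (\<forall>v\<in>Fixed m n (Js ! p). Y p v = 1) \<and>
     (\<forall>i<m. \<forall>l<n. phi m n (Js ! p) (\<lambda>v. y (p, v)) $$ (i, l) = A p i * B p l * phi m n (Js ! p) (Y p) $$ (i, l))" by blast
  define AA where "AA = (\<lambda>i. \<Prod>p\<in>S1. A p i)"
  define BB where "BB = (\<lambda>l. \<Prod>p\<in>S1. B p l)"
  have BB: "\<forall>l<n. BB l \<noteq> 0" using Y unfolding BB_def S1_def by auto
  have js0: "set (Js ! 0) \<subseteq> {..<n}" using Js by auto
  obtain y0' where y0': "\<forall>i<m. \<forall>l<n. phi m n (Js ! 0) y0' $$ (i, l) = AA i * BB l * phi m n (Js ! 0) (\<lambda>v. y (0, v)) $$ (i, l)"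
    using scale1[OF js0 BB, of m AA "\<lambda>v. y (0, v)"] by blast
  define z where "z = (\<lambda>(p, v). if p = 0 then y0' v else Y p v)"
  have fz0: "(\<lambda>v. fixup m n Js z (0, v)) = y0'" by (auto simp: fixup_def z_def)
  have fzp: "(\<lambda>v. fixup m n Js z (p, v)) = Y p" if "p \<in> S1" for p
    using that Y by (auto simp: fixup_def z_def S1_def)
  have split: "{..<s} = insert 0 S1" using Js(1) unfolding S1_def s_def by auto
  have "hprod m n Js y = hprod m n Js (fixup m n Js z)"
  proof (rule eq_matI)
    fix i l assume il: "i < dim_row (hprod m n Js (fixup m n Js z))" "l < dim_col (hprod m n Js (fixup m n Js z))"
    then have il: "i < m" "l < n" by (auto simp: hprod_def)
    have "hprod m n Js y $$ (i, l) = phi m n (Js ! 0) (\<lambda>v. y (0, v)) $$ (i, l) *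
        (\<Prod>p\<in>S1. phi m n (Js ! p) (\<lambda>v. y (p, v)) $$ (i, l))"
      using il by (simp add: hprod_entry split S1_def s_def[symmetric])
    also have "(\<Prod>p\<in>S1. phi m n (Js ! p) (\<lambda>v. y (p, v)) $$ (i, l))
        = (\<Prod>p\<in>S1. A p i * B p l * phi m n (Js ! p) (Y p) $$ (i, l))"
      using Y il by (intro prod.cong) auto
    also have "\<dots> = AA i * BB l * (\<Prod>p\<in>S1. phi m n (Js ! p) (Y p) $$ (i, l))"
      by (simp add: prod.distrib AA_def BB_def)
    finally have L: "hprod m n Js y $$ (i, l) = (AA i * BB l * phi m n (Js ! 0) (\<lambda>v. y (0, v)) $$ (i, l)) *
        (\<Prod>p\<in>S1. phi m n (Js ! p) (Y p) $$ (i, l))" by simp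
    have "hprod m n Js (fixup m n Js z) $$ (i, l) = phi m n (Js ! 0) y0' $$ (i, l) *
        (\<Prod>p\<in>S1. phi m n (Js ! p) (Y p) $$ (i, l))"
    proof -
      have "hprod m n Js (fixup m n Js z) $$ (i, l) = phi m n (Js ! 0) (\<lambda>v. fixup m n Js z (0, v)) $$ (i, l) *
        (\<Prod>p\<in>S1. phi m n (Js ! p) (\<lambda>v. fixup m n Js z (p, v)) $$ (i, l))"
        using il by (simp add: hprod_entry split S1_def s_def[symmetric])
      also have "(\<Prod>p\<in>S1. phi m n (Js ! p) (\<lambda>v. fixup m n Js z (p, v)) $$ (i, l))
          = (\<Prod>p\<in>S1. phi m n (Js ! p) (Y p) $$ (i, l))"
        using fzp by (intro prod.cong) auto
      finally show ?thesis using fz0 by simp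
    qed
    then show "hprod m n Js y $$ (i, l) = hprod m n Js (fixup m n Js z) $$ (i, l)"
      using L y0' il by simp
  qed (auto simp: hprod_def)
  then show ?thesis by blast
qed

lemma card_Ivars:
  assumes "distinct js" "set js \<subseteq> {..<n}"
  shows "card (Ivars m n js) = m * length js + length js * (n - length js)"
proof -
  have c1: "card (Inl ` ({..<m} \<times> set js) :: vv set) = m * length js"
    by (simp add: card_image card_cartesian_product distinct_card[OF assms(1)])
  have c2: "card (Inr ` ({..<length js} \<times> ({..<n} - set js)) :: vv set) = length js * (n - length js)"
    by (simp add: card_image card_cartesian_product card_Diff_subset[OF _ assms(2)] distinct_card[OF assms(1)])
  show ?thesis unfolding Ivars_def using c1 c2 by (subst card_Un_disjoint) auto
qed

lemma card_Fixed:
  assumes "distinct js" "set js \<subseteq> {..<n}" "js \<noteq> []" "0 < m"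
  shows "card (Fixed m n js) = m + length js - 1 + (n - length js)"
proof -
  define X where "X = {..<m} \<times> {js ! 0} \<union> {0} \<times> set js"
  have j1: "js ! 0 \<in> set js" using assms(3) by simp
  have "card ({..<m} \<times> {js ! 0}) + card ({0::nat} \<times> set js) = card X + card ({..<m} \<times> {js ! 0} \<inter> {0} \<times> set js)"
    unfolding X_def by (rule card_Un_Int) auto
  moreover have "{..<m} \<times> {js ! 0} \<inter> {0} \<times> set js = {(0, js ! 0)}" using assms(4) j1 by auto
  ultimately have cX: "card X = m + length js - 1"
    by (simp add: card_cartesian_product distinct_card[OF assms(1)])
  have c1: "card (Inl ` X :: vv set) = m + length js - 1" by (simp add: card_image cX)
  have c2: "card (Inr ` ({0::nat} \<times> ({..<n} - set js)) :: vv set) = n - length js"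
    by (simp add: card_image card_cartesian_product card_Diff_subset[OF _ assms(2)] distinct_card[OF assms(1)])
  show ?thesis unfolding Fixed_def X_def[symmetric] using c1 c2 by (subst card_Un_disjoint) (auto simp: X_def)
qed

lemma card_Inorm:
  assumes Js: "Js \<noteq> []" "\<forall>js\<in>set Js. distinct js \<and> length js = r \<and> set js \<subseteq> {..<n}"
    and r: "0 < r" and m: "0 < m"
  shows "card (Inorm m n Js) = (m * r + r * (n - r)) + (length Js - 1) * ((m * r + r * (n - r)) - (m + r - 1 + (n - r)))"
proof -
  define s where "s = length Js"
  have val: "distinct (Js ! p) \<and> length (Js ! p) = r \<and> set (Js ! p) \<subseteq> {..<n}" if "p < s" for p
    using Js(2) that nth_mem unfolding s_def by blast
  have "card (Inorm m n Js) = (\<Sum>p<s. card (if p = 0 then Ivars m n (Js ! p) else Ivars m n (Js ! p) - Fixed m n (Js ! p)))"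
    unfolding Inorm_def s_def by (subst card_SigmaI) auto
  also have "{..<s} = insert 0 {1..<s}" using Js(1) unfolding s_def by auto
  also have "(\<Sum>p\<in>insert 0 {1..<s}. card (if p = 0 then Ivars m n (Js ! p) else Ivars m n (Js ! p) - Fixed m n (Js ! p)))
     = card (Ivars m n (Js ! 0)) + (\<Sum>p\<in>{1..<s}. card (Ivars m n (Js ! p) - Fixed m n (Js ! p)))"
    by (subst sum.insert) auto
  also have "card (Ivars m n (Js ! 0)) = m * r + r * (n - r)"
    using card_Ivars val[of 0] Js(1) unfolding s_def by auto
  also have "(\<Sum>p\<in>{1..<s}. card (Ivars m n (Js ! p) - Fixed m n (Js ! p)))
       = (\<Sum>p\<in>{1..<s}. (m * r + r * (n - r)) - (m + r - 1 + (n - r)))"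
  proof (rule sum.cong[OF refl])
    fix p assume "p \<in> {1..<s}"
    then have v: "distinct (Js ! p)" "length (Js ! p) = r" "set (Js ! p) \<subseteq> {..<n}" using val by auto
    then have ne: "Js ! p \<noteq> []" using r by auto
    show "card (Ivars m n (Js ! p) - Fixed m n (Js ! p)) = (m * r + r * (n - r)) - (m + r - 1 + (n - r))"
      using card_Diff_subset[OF finite_Fixed Fixed_sub[OF m ne]] card_Ivars[OF v(1,3)] card_Fixed[OF v(1,3) ne m] v(2)
      by simp
  qed
  also have "\<dots> = (s - 1) * ((m * r + r * (n - r)) - (m + r - 1 + (n - r)))" by simp
  finally show ?thesis unfolding s_def .
qed

lemma dep_bound_hprod:
  assumes Js: "Js \<noteq> []" "\<forall>js\<in>set Js. distinct js \<and> length js = r \<and> set js \<subseteq> {..<n}"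
    and r: "0 < r" and m: "0 < m" and d: "card (Inorm m n Js) \<le> d"
  shows "dep_bound m n (range (hprod m n Js)) d"
proof -
  have Jp: "\<forall>p<length Js. set (Js ! p) \<subseteq> {..<n} \<and> Js ! p \<noteq> []"
  proof (intro allI impI)
    fix p assume "p < length Js"
    then have "Js ! p \<in> set Js" by simp
    then show "set (Js ! p) \<subseteq> {..<n} \<and> Js ! p \<noteq> []" using Js(2) r by fastforce
  qed
  have H1: "Hgen m n Js (\<lambda>_. 1) \<noteq> 0" by (simp add: Hgen_def)
  have sub: "hprod m n Js ` {y. Hgen m n Js y \<noteq> 0} \<subseteq> (\<lambda>z. hprod m n Js (fixup m n Js z)) ` UNIV"
  proof
    fix A assume "A \<in> hprod m n Js ` {y. Hgen m n Js y \<noteq> 0}"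
    then obtain y where y: "A = hprod m n Js y" "Hgen m n Js y \<noteq> 0" by blast
    obtain z where "hprod m n Js y = hprod m n Js (fixup m n Js z)" using hprod_norm[OF Js(1) Jp m y(2)] by blast
    then show "A \<in> (\<lambda>z. hprod m n Js (fixup m n Js z)) ` UNIV" using y(1) by blast
  qed
  have "dep_bound m n ((\<lambda>z. hprod m n Js (fixup m n Js z)) ` UNIV) d"
    by (rule dep_bound_param[OF finite_Inorm d isP_fixup_hprod])
  then have db: "dep_bound m n (hprod m n Js ` {y. Hgen m n Js y \<noteq> 0}) d"
    by (rule dep_bound_subset[OF _ sub])
  have ne: "\<forall>p<length Js. Js ! p \<noteq> []" using Jp by blast
  show ?thesis
    by (rule dep_bound_dense[OF finite_Iall isP_hprod isP_Hgen[OF m ne] H1 db])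
qed



lemma (in vec_space) rank_cover_set:
  assumes A: "A \<in> carrier_mat n nc" and rk: "rank A \<le> r" and rn: "r \<le> nc"
  shows "\<exists>J. J \<subseteq> {..<nc} \<and> card J = r \<and> (\<forall>l<nc. col A l \<in> span (col A ` J))"
proof -
  obtain S where S: "maximal S (\<lambda>T. T \<subseteq> set (cols A) \<and> lin_indpt T)"
    using maximal_exists[of "(\<lambda>T. T \<subseteq> set (cols A) \<and> lin_indpt T)" "card (set (cols A))" "{}"]
    by (meson List.finite_set card_mono empty_iff empty_subsetI finite_lin_indpt2 rev_finite_subset)
  have Ssub: "S \<subseteq> set (cols A)" and Sind: "lin_indpt S" using S unfolding maximal_def by auto
  have colsC: "set (cols A) \<subseteq> carrier_vec n" using A cols_dim by blast
  have SC: "S \<subseteq> carrier_vec n" using Ssub colsC by blast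
  have fS: "finite S" using Ssub finite_subset by blast
  have cardS: "card S = rank A" using rank_card_indpt[OF A S] by simp
  have inspan: "c \<in> span S" if c: "c \<in> set (cols A)" for c
  proof (rule ccontr)
    assume nc: "c \<notin> span S"
    have cC: "c \<in> carrier_vec n" using c colsC by blast
    have "S \<subseteq> span S" using in_own_span[OF SC] .
    then have cS: "c \<notin> S" using nc by blast
    have "lin_indpt (S \<union> {c})" using lin_dep_iff_in_span[OF SC Sind cC cS] nc by blast
    moreover have "S \<union> {c} \<subseteq> set (cols A)" using Ssub c by blast
    moreover have "S \<union> {c} \<supseteq> S" by blast
    moreover have mx: "\<forall>B. B \<supseteq> S \<and> (B \<subseteq> set (cols A) \<and> lin_indpt B) \<longrightarrow> B = S"
      using S unfolding maximal_def by blast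
    ultimately have "S \<union> {c} = S" by blast
    then show False using cS by blast
  qed
  have "\<forall>v\<in>S. \<exists>j. j < nc \<and> col A j = v"
  proof
    fix v assume "v \<in> S"
    then have "v \<in> set (cols A)" using Ssub by blast
    then obtain j where j: "j < length (cols A)" "cols A ! j = v" unfolding in_set_conv_nth by blast
    have dc: "dim_col A = nc" using A by (rule carrier_matD)
    have jn: "j < nc" using j(1) dc by (simp only: cols_length)
    have "col A j = v" using j(2) cols_nth[of j A] jn dc by simp
    then show "\<exists>j. j < nc \<and> col A j = v" using jn by blast
  qed
  from bchoice[OF this] obtain f where f: "\<forall>v\<in>S. f v < nc \<and> col A (f v) = v" by blast
  define J0 where "J0 = f ` S"
  have injf: "inj_on f S"
  proof (rule inj_onI)
    fix x y assume xy: "x \<in> S" "y \<in> S" "f x = f y"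
    have e1: "col A (f x) = x" using f xy(1) by blast
    have e2: "col A (f y) = y" using f xy(2) by blast
    have "x = col A (f x)" using e1 by (rule sym)
    also have "\<dots> = col A (f y)" using xy(3) by (rule arg_cong)
    also have "\<dots> = y" by (rule e2)
    finally show "x = y" .
  qed
  have cJ0: "card J0 = card S" unfolding J0_def using card_image[OF injf] .
  have J0n: "J0 \<subseteq> {..<nc}" unfolding J0_def using f by (simp add: image_subset_iff)
  have fJ0: "finite J0" unfolding J0_def using fS by (rule finite_imageI)
  have "(\<lambda>v. col A (f v)) ` S = (\<lambda>v. v) ` S" by (rule image_cong) (use f in auto)
  then have SJ0: "S = col A ` J0" unfolding J0_def image_image by simp
  have "r - card J0 \<le> card ({..<nc} - J0)"
    using card_Diff_subset[OF finite_subset[OF J0n finite_lessThan] J0n] cJ0 cardS rk rn by simp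
  then obtain K where K: "K \<subseteq> {..<nc} - J0" "card K = r - card J0" "finite K"
    by (rule obtain_subset_with_card_n)
  define J where "J = J0 \<union> K"
  have "card J = card J0 + card K" unfolding J_def
    by (rule card_Un_disjoint) (use K fJ0 in auto)
  then have cJ: "card J = r" using K(2) cJ0 cardS rk by simp
  have Jn: "J \<subseteq> {..<nc}" using J0n K(1) unfolding J_def by auto
  have "S \<subseteq> col A ` J" unfolding SJ0 J_def by blast
  then have "span S \<subseteq> span (col A ` J)" by (rule span_is_monotone)
  moreover have "\<forall>l<nc. col A l \<in> span S"
  proof (intro allI impI)
    fix l assume "l < nc"
    have dc: "dim_col A = nc" using A by (rule carrier_matD)
    have l': "l < length (cols A)" using \<open>l < nc\<close> dc by (simp only: cols_length)
    have "cols A ! l = col A l" using cols_nth[of l A] \<open>l < nc\<close> dc by simp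
    then have "col A l \<in> set (cols A)" using nth_mem[OF l'] by simp
    then show "col A l \<in> span S" by (rule inspan)
  qed
  ultimately have "\<forall>l<nc. col A l \<in> span (col A ` J)" by (meson subsetD)
  then show ?thesis using Jn cJ by (intro exI[of _ J] conjI)
qed

lemma (in vec_space) rank_cover_list:
  assumes A: "A \<in> carrier_mat n nc" and rk: "rank A \<le> r" and rn: "r \<le> nc"
  shows "\<exists>js C. distinct js \<and> length js = r \<and> set js \<subseteq> {..<nc} \<and>
     (\<forall>l<nc. \<forall>i<n. A $$ (i, l) = (\<Sum>t<r. C l t * A $$ (i, js ! t)))"
proof -
  obtain J where J: "J \<subseteq> {..<nc}" "card J = r" "\<forall>l<nc. col A l \<in> span (col A ` J)"
    using rank_cover_set[OF A rk rn] by blast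
  have fJ: "finite J" using J(1) finite_subset by blast
  define js where "js = sorted_list_of_set J"
  have js: "distinct js" "length js = r" "set js = J" using fJ J(2) by (auto simp: js_def)
  define vs where "vs = map (col A) js"
  have vsC: "set vs \<subseteq> carrier_vec n" using js J(1) A by (auto simp: vs_def)
  have setvs: "set vs = col A ` J" using js by (simp add: vs_def)
  have "\<forall>l. \<exists>c. l < nc \<longrightarrow> col A l = lincomb_list c vs"
  proof
    fix l
    show "\<exists>c. l < nc \<longrightarrow> col A l = lincomb_list c vs"
    proof (cases "l < nc")
      case True
      then have "col A l \<in> span (col A ` J)" using J(3) by blast
      then have "col A l \<in> span_list vs" using span_list_as_span[OF vsC] setvs by simp
      then obtain c where "col A l = lincomb_list c vs" by (rule in_span_listE)
      then show ?thesis by blast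
    qed simp
  qed
  from choice[OF this] obtain C where C: "\<forall>l. l < nc \<longrightarrow> col A l = lincomb_list (C l) vs" by blast
  have "A $$ (i, l) = (\<Sum>t<r. C l t * A $$ (i, js ! t))" if il: "l < nc" "i < n" for i l
  proof -
    have dims: "\<forall>w\<in>set vs. dim_vec w = n" using vsC by auto
    have "A $$ (i, l) = col A l $ i" using A il by simp
    also have "\<dots> = (mat_of_cols n vs *\<^sub>v vec (length vs) (C l)) $ i"
      using C il lincomb_list_as_mat_mult[OF dims] by simp
    also have "\<dots> = (\<Sum>t<r. vs ! t $ i * C l t)"
      using il js by (simp add: scalar_prod_def vs_def atLeast0LessThan mat_of_cols_def)
    also have "\<dots> = (\<Sum>t<r. C l t * A $$ (i, js ! t))"
    proof (rule sum.cong[OF refl])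
      fix t assume "t \<in> {..<r}"
      then have "js ! t < nc" using js J(1) nth_mem by fastforce
      then show "vs ! t $ i * C l t = C l t * A $$ (i, js ! t)"
        using \<open>t \<in> {..<r}\<close> js il A by (simp add: vs_def)
    qed
    finally show ?thesis .
  qed
  then show ?thesis using js J(1) by blast
qed



fun Qs :: "nat \<Rightarrow> nat \<Rightarrow> nat \<Rightarrow> nat \<Rightarrow> complex mat set" where
  "Qs m n r 0 = {mat m n (\<lambda>_. 1)}"
| "Qs m n r (Suc k) = {hadamard A B | A B. A \<in> rank_le_cone m n r \<and> B \<in> Qs m n r k}"

definition Valid :: "nat \<Rightarrow> nat \<Rightarrow> nat list set" where
  "Valid n r = {js. distinct js \<and> length js = r \<and> set js \<subseteq> {..<n}}"

definition LL :: "nat \<Rightarrow> nat \<Rightarrow> nat \<Rightarrow> nat list list set" where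
  "LL n r k = {Js. set Js \<subseteq> Valid n r \<and> length Js = k}"

lemma finite_Valid: "finite (Valid n r)"
proof -
  have "Valid n r \<subseteq> {xs. set xs \<subseteq> {..<n} \<and> length xs = r}" unfolding Valid_def by (rule Collect_mono) simp
  moreover have "finite {xs. set xs \<subseteq> {..<n} \<and> length xs = r}" by (rule finite_lists_length_eq) simp
  ultimately show ?thesis by (rule finite_subset)
qed

lemma finite_LL: "finite (LL n r k)"
  unfolding LL_def by (rule finite_lists_length_eq[OF finite_Valid])

lemma hadamard_carrier: "A \<in> carrier_mat m n \<Longrightarrow> hadamard A B \<in> carrier_mat m n"
  unfolding hadamard_def carrier_mat_def by simp

lemma hadamard_entry: "i < dim_row A \<Longrightarrow> j < dim_col A \<Longrightarrow> hadamard A B $$ (i, j) = A $$ (i, j) * B $$ (i, j)"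
  by (simp add: hadamard_def)

lemma cone_carrier: "rank_le_cone m n r \<subseteq> carrier_mat m n"
  unfolding rank_le_cone_def by (rule Collect_restrict)

lemma Qs_carrier: "Qs m n r k \<subseteq> carrier_mat m n"
proof (cases k)
  case 0 then show ?thesis by auto
next
  case (Suc k')
  have "hadamard A B \<in> carrier_mat m n" if "A \<in> rank_le_cone m n r" for A B
    using hadamard_carrier cone_carrier that by blast
  then show ?thesis using Suc by auto
qed

lemma rank_phi:
  assumes A: "A \<in> rank_le_cone m n r" and rn: "r \<le> n"
  shows "\<exists>js y. js \<in> Valid n r \<and> A = phi m n js y"
proof -
  have Ac: "A \<in> carrier_mat m n" and rk: "vec_space.rank m A \<le> r" using A unfolding rank_le_cone_def by auto
  obtain js C where js: "distinct js" "length js = r" "set js \<subseteq> {..<n}"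
    and C: "\<forall>l<n. \<forall>i<m. A $$ (i, l) = (\<Sum>t<r. C l t * A $$ (i, js ! t))"
    using vec_space.rank_cover_list[OF Ac rk rn] by blast
  define y where "y = (\<lambda>v. case v of Inl (i, j) \<Rightarrow> A $$ (i, j) | Inr (t, l) \<Rightarrow> C l t)"
  have "A = phi m n js y"
  proof (rule eq_matI)
    fix i l assume "i < dim_row (phi m n js y)" "l < dim_col (phi m n js y)"
    then have il: "i < m" "l < n" by (auto simp: phi_def)
    show "A $$ (i, l) = phi m n js y $$ (i, l)"
    proof (cases "l \<in> set js")
      case True then show ?thesis using il by (simp add: phi_entry y_def)
    next
      case False
      have "A $$ (i, l) = (\<Sum>t<r. C l t * A $$ (i, js ! t))" using C il by blast
      also have "\<dots> = (\<Sum>t<length js. y (Inr (t, l)) * y (Inl (i, js ! t)))"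
        using js(2) by (simp add: y_def)
      finally show ?thesis using il False by (simp add: phi_entry)
    qed
  qed (use Ac in \<open>auto simp: phi_def\<close>)
  then show ?thesis using js unfolding Valid_def by blast
qed

lemma Qs_cover:
  assumes rn: "r \<le> n"
  shows "Qs m n r k \<subseteq> (\<Union>Js\<in>LL n r k. range (hprod m n Js))"
proof (induction k)
  case 0
  have "mat m n (\<lambda>_. 1) = hprod m n [] (\<lambda>_. 0)" by (rule eq_matI) (auto simp: hprod_def)
  moreover have "[] \<in> LL n r 0" unfolding LL_def by simp
  ultimately show ?case by auto
next
  case (Suc k)
  show ?case
  proof
    fix X assume "X \<in> Qs m n r (Suc k)"
    then obtain A B where X: "X = hadamard A B" "A \<in> rank_le_cone m n r" "B \<in> Qs m n r k" by auto
    obtain js y0 where js: "js \<in> Valid n r" "A = phi m n js y0" using rank_phi[OF X(2) rn] by blast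
    obtain Js y1 where Js: "Js \<in> LL n r k" "B = hprod m n Js y1" using Suc.IH X(3) by blast
    define y where "y = (\<lambda>(p, v). if p = 0 then y0 v else y1 (p - 1, v))"
    have "X = hprod m n (js # Js) y"
    proof (rule eq_matI)
      fix i l assume "i < dim_row (hprod m n (js # Js) y)" "l < dim_col (hprod m n (js # Js) y)"
      then have il: "i < m" "l < n" by (auto simp: hprod_def)
      have "X $$ (i, l) = A $$ (i, l) * B $$ (i, l)"
        using X(1) js(2) il by (simp add: hadamard_entry phi_def)
      also have "\<dots> = phi m n js y0 $$ (i, l) * (\<Prod>p<length Js. phi m n (Js ! p) (\<lambda>v. y1 (p, v)) $$ (i, l))"
        using js(2) Js(2) il by (simp add: hprod_entry)
      also have "\<dots> = hprod m n (js # Js) y $$ (i, l)"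
        using il by (simp add: hprod_entry prod.lessThan_Suc_shift y_def del: prod.lessThan_Suc)
      finally show "X $$ (i, l) = hprod m n (js # Js) y $$ (i, l)" .
    qed (use X(1) js(2) in \<open>auto simp: hprod_def hadamard_def phi_def\<close>)
    moreover have "js # Js \<in> LL n r (Suc k)" using js(1) Js(1) unfolding LL_def by auto
    ultimately show "X \<in> (\<Union>Js\<in>LL n r (Suc k). range (hprod m n Js))" by blast
  qed
qed

lemma pf_hadamard_left:
  assumes A: "A \<in> carrier_mat m n" and f: "f \<in> poly_fun m n"
  shows "(\<lambda>B. f (hadamard A B)) \<in> poly_fun m n"
  using f
proof (induction rule: poly_fun.induct)
  case (pf_const c) then show ?case by (rule poly_fun.pf_const)
next
  case (pf_var i j)
  have "(\<lambda>B. A $$ (i, j) * B $$ (i, j)) \<in> poly_fun m n"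
    by (rule poly_fun.pf_mult[OF poly_fun.pf_const poly_fun.pf_var[OF pf_var]])
  moreover have "(\<lambda>B. hadamard A B $$ (i, j)) = (\<lambda>B. A $$ (i, j) * B $$ (i, j))"
    using A pf_var by (auto simp: hadamard_entry)
  ultimately show ?case by simp
next
  case (pf_add f g) show ?case by (rule poly_fun.pf_add[OF pf_add.IH])
next
  case (pf_mult f g) show ?case by (rule poly_fun.pf_mult[OF pf_mult.IH])
qed

lemma closed_preimage_had:
  assumes A: "A \<in> carrier_mat m n" and C: "zariski_closed m n C"
  shows "zariski_closed m n {B \<in> carrier_mat m n. hadamard A B \<in> C}"
proof -
  obtain F where F: "F \<subseteq> poly_fun m n" "C = {M \<in> carrier_mat m n. \<forall>f\<in>F. f M = 0}"
    using C unfolding zariski_closed_def by blast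
  define F' where "F' = (\<lambda>f B. f (hadamard A B)) ` F"
  have sub: "F' \<subseteq> poly_fun m n"
  proof
    fix g assume "g \<in> F'"
    then obtain f where f: "f \<in> F" "g = (\<lambda>B. f (hadamard A B))" unfolding F'_def by blast
    have "f \<in> poly_fun m n" using f(1) F(1) by blast
    then show "g \<in> poly_fun m n" unfolding f(2) by (rule pf_hadamard_left[OF A])
  qed
  have eq: "{B \<in> carrier_mat m n. hadamard A B \<in> C} = {B \<in> carrier_mat m n. \<forall>f\<in>F'. f B = 0}"
    unfolding F'_def F(2) using hadamard_carrier[OF A] by auto
  show ?thesis unfolding zariski_closed_def by (rule exI[of _ F']) (use sub eq in simp)
qed

lemma closure_mono: "S \<subseteq> T \<Longrightarrow> zariski_closure m n S \<subseteq> zariski_closure m n T"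
  unfolding zariski_closure_def by blast

lemma H_sub:
  "hadamard_power_cone m n (rank_le_cone m n r) k \<subseteq> zariski_closure m n (Qs m n r (Suc k))"
proof (induction k)
  case 0
  have "rank_le_cone m n r \<subseteq> Qs m n r (Suc 0)"
  proof
    fix A assume A: "A \<in> rank_le_cone m n r"
    then have Ac: "A \<in> carrier_mat m n" using cone_carrier by blast
    have "hadamard A (mat m n (\<lambda>_. 1)) = A"
      by (rule eq_matI) (use Ac in \<open>auto simp: hadamard_def\<close>)
    then show "A \<in> Qs m n r (Suc 0)" using A by force
  qed
  then show ?case by (simp add: closure_mono)
next
  case (Suc k)
  define C where "C = zariski_closure m n (Qs m n r (Suc (Suc k)))"
  have Cc: "zariski_closed m n C" unfolding C_def by (rule closure_closed[OF Qs_carrier])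
  have "{hadamard A B | A B. A \<in> rank_le_cone m n r \<and> B \<in> hadamard_power_cone m n (rank_le_cone m n r) k} \<subseteq> C"
  proof
    fix X assume "X \<in> {hadamard A B | A B. A \<in> rank_le_cone m n r \<and> B \<in> hadamard_power_cone m n (rank_le_cone m n r) k}"
    then obtain A B where X: "X = hadamard A B" "A \<in> rank_le_cone m n r" "B \<in> hadamard_power_cone m n (rank_le_cone m n r) k"
      by blast
    have Ac: "A \<in> carrier_mat m n" using X(2) cone_carrier by blast
    define ZA where "ZA = {B \<in> carrier_mat m n. hadamard A B \<in> C}"
    have ZAc: "zariski_closed m n ZA" unfolding ZA_def by (rule closed_preimage_had[OF Ac Cc])
    have "Qs m n r (Suc k) \<subseteq> ZA"
    proof
      fix B' assume B': "B' \<in> Qs m n r (Suc k)"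
      then have "hadamard A B' \<in> Qs m n r (Suc (Suc k))" using X(2) by auto
      then have "hadamard A B' \<in> C" unfolding C_def using closure_sup by blast
      then show "B' \<in> ZA" unfolding ZA_def using B' Qs_carrier by blast
    qed
    then have "zariski_closure m n (Qs m n r (Suc k)) \<subseteq> ZA" by (rule closure_least[OF ZAc])
    then have "B \<in> ZA" using Suc.IH X(3) by blast
    then show "X \<in> C" using X(1) unfolding ZA_def by blast
  qed
  then have "zariski_closure m n {hadamard A B | A B. A \<in> rank_le_cone m n r \<and> B \<in> hadamard_power_cone m n (rank_le_cone m n r) k} \<subseteq> C"
    by (rule closure_least[OF Cc])
  then show ?case unfolding C_def by simp
qed

lemma arith_d1:
  assumes "1 \<le> s" "1 \<le> r" "r \<le> m" "r \<le> n"
  shows "int ((m * r + r * (n - r)) + (s - 1) * ((m * r + r * (n - r)) - (m + r - 1 + (n - r))))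
    = int s * int r * (int m + int n - int r) - (int s - 1) * (int m + int n - 1)"
proof -
  define R where "R = m * r + r * (n - r)"
  define F where "F = m + r - 1 + (n - r)"
  obtain k where k: "n = r + k" using assms(4) le_iff_add by blast
  have R: "int R = int r * (int m + int n - int r)" unfolding R_def k by (simp add: algebra_simps)
  have F: "int F = int m + int n - 1" using assms unfolding F_def by (simp add: of_nat_diff)
  have e: "int R - int F = (int r - 1) * (int m + int n - int r - 1)" unfolding R F by (simp add: algebra_simps)
  have "(int r - 1) * (int m + int n - int r - 1) \<ge> 0" using assms by (intro mult_nonneg_nonneg) auto
  then have le: "F \<le> R" using e by linarith
  have "int (R + (s - 1) * (R - F)) = int R + (int s - 1) * (int R - int F)"
    using le assms(1) by (simp add: of_nat_diff)
  also have "\<dots> = int s * int r * (int m + int n - int r) - (int s - 1) * (int m + int n - 1)"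
    unfolding R F by (simp add: algebra_simps)
  finally show ?thesis unfolding R_def F_def .
qed

theorem proposition4p20:
  fixes m n r s :: nat
  assumes "s \<ge> 1" and "1 \<le> r" and "r \<le> min m n"
  shows "zdim m n (hadamard_power_cone m n (rank_le_cone m n r) (s - 1))
           \<le> enat (nat (min (int s * int r * (int m + int n - int r)
                                - (int s - 1) * (int m + int n - 1))
                               (int m * int n)))"
proof -
  have rm: "r \<le> m" and rn: "r \<le> n" using assms(3) by auto
  have m0: "0 < m" and r0: "0 < r" using assms rm by auto
  define V where "V = hadamard_power_cone m n (rank_le_cone m n r) (s - 1)"
  define d1 where "d1 = (m * r + r * (n - r)) + (s - 1) * ((m * r + r * (n - r)) - (m + r - 1 + (n - r)))"
  have Vsub: "V \<subseteq> zariski_closure m n (Qs m n r s)"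
    using H_sub[of m n r "s - 1"] assms(1) unfolding V_def by simp
  have Vc: "V \<subseteq> carrier_mat m n" using Vsub closure_carrier[OF Qs_carrier] by blast
  have "dep_bound m n (\<Union>Js\<in>LL n r s. range (hprod m n Js)) d1"
  proof (rule dep_bound_UN[OF finite_LL])
    fix Js assume Js: "Js \<in> LL n r s"
    then have ne: "Js \<noteq> []" using assms(1) unfolding LL_def by auto
    have val: "\<forall>js\<in>set Js. distinct js \<and> length js = r \<and> set js \<subseteq> {..<n}"
      using Js unfolding LL_def Valid_def by auto
    have len: "length Js = s" using Js unfolding LL_def by auto
    have "card (Inorm m n Js) = d1" unfolding d1_def using card_Inorm[OF ne val r0 m0] len by simp
    then show "dep_bound m n (range (hprod m n Js)) d1"
      using dep_bound_hprod[OF ne val r0 m0] by simp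
  qed
  then have "dep_bound m n (Qs m n r s) d1" by (rule dep_bound_subset[OF _ Qs_cover[OF rn]])
  then have "dep_bound m n (zariski_closure m n (Qs m n r s)) d1" by (rule dep_bound_closure[OF Qs_carrier])
  then have D1: "dep_bound m n V d1" by (rule dep_bound_subset[OF _ Vsub])
  define \<psi> where "\<psi> = (\<lambda>y::nat \<times> nat \<Rightarrow> complex. mat m n (\<lambda>(i, j). y (i, j)))"
  have "dep_bound m n (\<psi> ` UNIV) (m * n)"
  proof (rule dep_bound_param[of "{..<m} \<times> {..<n}"])
    show "finite ({..<m} \<times> {..<n})" by simp
    show "card ({..<m} \<times> {..<n}) \<le> m * n" by (simp add: card_cartesian_product)
    fix i j assume ij: "i < m" "j < n"
    have "isP ({..<m} \<times> {..<n}) (\<lambda>y. y (i, j))" by (rule isP_var) (use ij in auto)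
    then show "isP ({..<m} \<times> {..<n}) (\<lambda>y. \<psi> y $$ (i, j))" using ij by (simp add: \<psi>_def)
  qed
  moreover have "carrier_mat m n \<subseteq> \<psi> ` UNIV"
  proof
    fix A :: "complex mat" assume A: "A \<in> carrier_mat m n"
    have "A = \<psi> (\<lambda>(i, j). A $$ (i, j))" by (rule eq_matI) (use A in \<open>auto simp: \<psi>_def\<close>)
    then show "A \<in> \<psi> ` UNIV" by blast
  qed
  ultimately have sub2: "V \<subseteq> \<psi> ` UNIV" using Vc by blast
  have D2: "dep_bound m n V (m * n)" by (rule dep_bound_subset[OF \<open>dep_bound m n (\<psi> ` UNIV) (m * n)\<close> sub2])
  have D: "dep_bound m n V (min d1 (m * n))"
    by (cases "d1 \<le> m * n") (use D1 D2 in \<open>auto simp: min_def\<close>)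
  have Z: "zdim m n V \<le> enat (min d1 (m * n))" by (rule zdim_le[OF D])
  have ie: "int d1 = int s * int r * (int m + int n - int r) - (int s - 1) * (int m + int n - 1)"
    unfolding d1_def by (rule arith_d1[OF assms(1,2) rm rn])
  have e: "nat (min (int s * int r * (int m + int n - int r) - (int s - 1) * (int m + int n - 1)) (int m * int n)) = min d1 (m * n)"
  proof -
    have "int m * int n = int (m * n)" by simp
    then have "min (int d1) (int m * int n) = int (min d1 (m * n))" by (simp only: of_nat_min)
    then show ?thesis unfolding ie[symmetric] by simp
  qed
  show ?thesis using Z unfolding V_def e .
qed


end
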